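(* Let $f(0),f(1)$ be probability mass functions on $\{0,\ldots,n\}$ and suppose there exists a geodesic $f$ between them (with coefficients $\boldsymbol\alpha$ and velocity field $v_{\alpha,k}$). Then $\beta(t)$ is constant for almost every $t$. Moreover, writing $\lambda(t)=\sum_kkf_k(t)$ for the mean, $$V_n(f(0),f(1))\ge|\lambda(0)-\lambda(1)|,$$ with equality if and only if $v_{\alpha,k}(t)\equiv v$ for all $k$ and $t$, for some constant $v$.
   Context: Fix $n\ge1$. For a sequence $(a_k)_{k\in\mathbb Z}$ write $\nabla_1a_k=a_k-a_{k-1}$; functions indexed by $k$ are extended by $0$ outside their index range. $\mathcal A$ is the set of measurable $\boldsymbol\alpha(t)=(\alpha_0(t),\ldots,\alpha_n(t))$, $t\in[0,1]$, with $\alpha_0\equiv0$, $\alpha_n\equiv1$, $0\le\alpha_k\le1$. For probability mass functions $f(0),f(1)$ on $\{0,\ldots,n\}$, $\mathcal P_{\mathbb Z}(f(0),f(1))$ is the set of continuous, piecewise differentiable families $(f_k(t))_{t\in[0,1]}$ of probability mass functions on $\{0,\ldots,n\}$ with $f_k(0)$, $f_k(1)$ the given ones. Given $\boldsymbol\alpha\in\mathcal A$ set $g_k(t)=\alpha_{k+1}(t)f_{k+1}(t)+(1-\alpha_k(t))f_k(t)$ for $k=0,\ldots,n-1$, and call $v_{\alpha,k}(t)$ a velocity field if $\frac{\partial f_k}{\partial t}(t)+\nabla_1\big(v_{\alpha,k}(t)g_k(t)\big)=0$ for $t$-almost every $t$ and $k=0,\ldots,n$. The path length is $\mathcal I(f)^2=\int_0^1\beta(t)\,dt$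 with $\beta(t)=\sum_{k=0}^{n-1}g_k(t)v_{\alpha,k}(t)^2$, and $V_n(f(0),f(1))^2=\inf\mathcal I(f)^2$, the infimum over all $f\in\mathcal P_{\mathbb Z}(f(0),f(1))$, $\boldsymbol\alpha\in\mathcal A$ and velocity fields. A path attaining the infimum is a geodesic. *)

theory Defs
  imports "HOL-Analysis.Analysis"
begin

definition pmf_on :: "nat \<Rightarrow> (nat \<Rightarrow> real) \<Rightarrow> bool" where
  "pmf_on n p \<longleftrightarrow> (\<forall>k. 0 \<le> p k) \<and> (\<forall>k>n. p k = 0) \<and> (\<Sum>k\<le>n. p k) = 1"

definition nabla1 :: "(nat \<Rightarrow> real) \<Rightarrow> nat \<Rightarrow> real" where
  "nabla1 a k = a k - (if k = 0 then 0 else a (k - 1))"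

definition paths :: "nat \<Rightarrow> (nat \<Rightarrow> real) \<Rightarrow> (nat \<Rightarrow> real) \<Rightarrow> (real \<Rightarrow> nat \<Rightarrow> real) set" where
  "paths n f0 f1 = {f. (\<forall>t\<in>{0..1}. pmf_on n (f t))
      \<and> (\<forall>k\<le>n. (\<lambda>t. f t k) piecewise_differentiable_on {0..1})
      \<and> f 0 = f0 \<and> f 1 = f1}"

definition coeffs :: "nat \<Rightarrow> (real \<Rightarrow> nat \<Rightarrow> real) set" where
  "coeffs n = {\<alpha>. (\<forall>k\<le>n. (\<lambda>t. \<alpha> t k) \<in> borel_measurable (lebesgue_on {0..1}))
      \<and> (\<forall>t\<in>{0..1}. \<alpha> t 0 = 0 \<and> \<alpha> t n = 1 \<and> (\<forall>k\<le>n. 0 \<le> \<alpha> t k \<and> \<alpha> t k \<le> 1))}"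

definition gcoef :: "(real \<Rightarrow> nat \<Rightarrow> real) \<Rightarrow> (real \<Rightarrow> nat \<Rightarrow> real) \<Rightarrow> real \<Rightarrow> nat \<Rightarrow> real" where
  "gcoef \<alpha> f t k = \<alpha> t (k + 1) * f t (k + 1) + (1 - \<alpha> t k) * f t k"

definition flux :: "nat \<Rightarrow> (real \<Rightarrow> nat \<Rightarrow> real) \<Rightarrow> (real \<Rightarrow> nat \<Rightarrow> real)
    \<Rightarrow> (real \<Rightarrow> nat \<Rightarrow> real) \<Rightarrow> real \<Rightarrow> nat \<Rightarrow> real" where
  "flux n \<alpha> f v t k = (if k < n then v t k * gcoef \<alpha> f t k else 0)"

definition velocity_field :: "nat \<Rightarrow> (real \<Rightarrow> nat \<Rightarrow> real) \<Rightarrow> (real \<Rightarrow> nat \<Rightarrow> real)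
    \<Rightarrow> (real \<Rightarrow> nat \<Rightarrow> real) \<Rightarrow> bool" where
  "velocity_field n f \<alpha> v \<longleftrightarrow>
     (\<forall>k<n. (\<lambda>t. v t k) \<in> borel_measurable (lebesgue_on {0..1})) \<and>
     (AE t in lebesgue_on {0..1}. \<forall>k\<le>n.
        ((\<lambda>s. f s k) has_real_derivative (- nabla1 (flux n \<alpha> f v t) k)) (at t within {0..1}))"

definition beta :: "nat \<Rightarrow> (real \<Rightarrow> nat \<Rightarrow> real) \<Rightarrow> (real \<Rightarrow> nat \<Rightarrow> real)
    \<Rightarrow> (real \<Rightarrow> nat \<Rightarrow> real) \<Rightarrow> real \<Rightarrow> real" where
  "beta n f \<alpha> v t = (\<Sum>k<n. gcoef \<alpha> f t k * (v t k)\<^sup>2)"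

definition path_length_sq :: "nat \<Rightarrow> (real \<Rightarrow> nat \<Rightarrow> real) \<Rightarrow> (real \<Rightarrow> nat \<Rightarrow> real)
    \<Rightarrow> (real \<Rightarrow> nat \<Rightarrow> real) \<Rightarrow> ennreal" where
  "path_length_sq n f \<alpha> v = (\<integral>\<^sup>+ t. ennreal (beta n f \<alpha> v t) \<partial>lebesgue_on {0..1})"

definition Vn_sq :: "nat \<Rightarrow> (nat \<Rightarrow> real) \<Rightarrow> (nat \<Rightarrow> real) \<Rightarrow> ennreal" where
  "Vn_sq n f0 f1 = Inf {path_length_sq n f \<alpha> v | f \<alpha> v.
      f \<in> paths n f0 f1 \<and> \<alpha> \<in> coeffs n \<and> velocity_field n f \<alpha> v}"

definition Vn :: "nat \<Rightarrow> (nat \<Rightarrow> real) \<Rightarrow> (nat \<Rightarrow> real) \<Rightarrow> ennreal" where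
  "Vn n f0 f1 = (if Vn_sq n f0 f1 = \<infinity> then \<infinity> else ennreal (sqrt (enn2real (Vn_sq n f0 f1))))"

definition is_geodesic :: "nat \<Rightarrow> (nat \<Rightarrow> real) \<Rightarrow> (nat \<Rightarrow> real) \<Rightarrow> (real \<Rightarrow> nat \<Rightarrow> real)
    \<Rightarrow> (real \<Rightarrow> nat \<Rightarrow> real) \<Rightarrow> (real \<Rightarrow> nat \<Rightarrow> real) \<Rightarrow> bool" where
  "is_geodesic n f0 f1 f \<alpha> v \<longleftrightarrow> f \<in> paths n f0 f1 \<and> \<alpha> \<in> coeffs n \<and> velocity_field n f \<alpha> v
     \<and> path_length_sq n f \<alpha> v = Vn_sq n f0 f1"

definition mean :: "nat \<Rightarrow> (nat \<Rightarrow> real) \<Rightarrow> real" where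
  "mean n p = (\<Sum>k\<le>n. real k * p k)"

end

theory Submission
  imports Defs
begin


lemma sum_gcoef_gen:
  fixes a p :: "nat \<Rightarrow> real"
  assumes "(\<Sum>k\<le>n. p k) = 1" "a 0 = 0" "a n = 1"
  shows "(\<Sum>k<n. a (k+1) * p (k+1) + (1 - a k) * p k) = 1"
proof -
  have 1: "(\<Sum>k<n. a (k+1) * p (k+1)) = (\<Sum>k\<le>n. a k * p k)"
  proof -
    have "(\<Sum>k\<le>n. a k * p k) = (\<Sum>k<Suc n. a k * p k)" by (simp only: lessThan_Suc_atMost)
    also have "\<dots> = (\<Sum>k<n. a (k+1) * p (k+1))" by (subst sum.lessThan_Suc_shift) (simp add: assms(2))
    finally show ?thesis by (rule sym)
  qed
  have 2: "(\<Sum>k<n. (1 - a k) * p k) = (\<Sum>k\<le>n. (1 - a k) * p k)"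
    using assms(3) by (simp add: lessThan_Suc_atMost[symmetric] del: lessThan_Suc_atMost)
  have "(\<Sum>k<n. a (k+1) * p (k+1) + (1 - a k) * p k) = (\<Sum>k\<le>n. a k * p k + (1 - a k) * p k)"
    by (simp only: sum.distrib 1 2)
  also have "\<dots> = (\<Sum>k\<le>n. p k)" by (simp add: algebra_simps)
  finally show ?thesis using assms(1) by simp
qed

lemma sum_by_parts_nabla:
  fixes F :: "nat \<Rightarrow> real"
  shows "(\<Sum>k\<le>N. real k * nabla1 F k) = real N * F N - (\<Sum>k<N. F k)"
proof (induction N)
  case 0 then show ?case by (simp add: nabla1_def)
next
  case (Suc N)
  have "(\<Sum>k\<le>Suc N. real k * nabla1 F k) = (\<Sum>k\<le>N. real k * nabla1 F k) + real (Suc N) * (F (Suc N) - F N)"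
    by (simp add: nabla1_def)
  also have "\<dots> = real (Suc N) * F (Suc N) - (\<Sum>k<Suc N. F k)"
    using Suc by (simp add: algebra_simps)
  finally show ?case .
qed

lemma sum_by_parts_flux:
  fixes F :: "nat \<Rightarrow> real"
  assumes "F n = 0"
  shows "(\<Sum>k\<le>n. real k * (- nabla1 F k)) = (\<Sum>k<n. F k)"
  using sum_by_parts_nabla[of F n] assms by (simp add: sum_negf)


lemma ae_lebesgue_on_negligible:
  assumes "AE x in lebesgue_on S. P x" "S \<in> sets lebesgue"
  obtains N where "negligible N" "\<And>x. x \<in> S \<Longrightarrow> x \<notin> N \<Longrightarrow> P x"
proof -
  have "AE x in lebesgue. x \<in> S \<longrightarrow> P x"
    using assms by (subst (asm) AE_restrict_space_iff) auto
  then obtain N where "negligible N" "{x. \<not> (x \<in> S \<longrightarrow> P x)} \<subseteq> N"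
    unfolding eventually_ae_filter_negligible by blast
  then show ?thesis using that by blast
qed

lemma paths_pd:
  assumes "f \<in> paths n f0 f1" "k \<le> n"
  shows "(\<lambda>t. f t k) piecewise_differentiable_on {0..1}"
  using assms by (auto simp: paths_def)

lemma paths_cont:
  assumes "f \<in> paths n f0 f1" "k \<le> n"
  shows "continuous_on {0..1} (\<lambda>t. f t k)"
  using paths_pd[OF assms] by (rule piecewise_differentiable_on_imp_continuous_on)

lemma ftc_mean:
  assumes "f \<in> paths n f0 f1" and vf: "velocity_field n f \<alpha> v"
  shows "((\<lambda>t. \<Sum>k<n. flux n \<alpha> f v t k) has_integral (mean n f1 - mean n f0)) {0..1}"
proof -
  have "\<forall>k\<in>{..n}. \<exists>s. finite s \<and> (\<forall>x\<in>{0..1} - s. (\<lambda>t. f t k) differentiable (at x within {0..1}))"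
    using paths_pd[OF assms(1)] by (auto simp: piecewise_differentiable_on_def)
  then obtain S where S: "\<And>k. k \<in> {..n} \<Longrightarrow> finite (S k)"
    "\<And>k x. k \<in> {..n} \<Longrightarrow> x \<in> {0..1} - S k \<Longrightarrow> (\<lambda>t. f t k) differentiable (at x within {0..1})"
    by metis
  define SS where "SS = (\<Union>k\<le>n. S k)"
  have finSS: "finite SS" using S(1) by (auto simp: SS_def)
  define D where "D x = (\<Sum>k\<le>n. real k * vector_derivative (\<lambda>t. f t k) (at x))" for x
  have deriv: "((\<lambda>t. mean n (f t)) has_vector_derivative D x) (at x)" if x: "x \<in> {0<..<1} - SS" for x
  proof -
    have "((\<lambda>t. f t k) has_vector_derivative vector_derivative (\<lambda>t. f t k) (at x)) (at x)" if "k \<le> n" for k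
    proof -
      have "(\<lambda>t. f t k) differentiable (at x within {0..1})"
        using S(2)[of k x] x that by (auto simp: SS_def)
      then have "(\<lambda>t. f t k) differentiable (at x)"
        using x by (simp add: at_within_Icc_at)
      then show ?thesis using vector_derivative_works by blast
    qed
    then have "((\<lambda>t. f t k) has_field_derivative vector_derivative (\<lambda>t. f t k) (at x)) (at x)" if "k \<le> n" for k
      using that by (simp add: has_real_derivative_iff_has_vector_derivative)
    then have "((\<lambda>t. \<Sum>k\<le>n. real k * f t k) has_field_derivative D x) (at x)"
      unfolding D_def by (intro DERIV_sum DERIV_cmult) auto
    then show ?thesis by (simp add: mean_def has_real_derivative_iff_has_vector_derivative)
  qed
  have cont: "continuous_on {0..1} (\<lambda>t. mean n (f t))"
    unfolding mean_def by (intro continuous_intros paths_cont[OF assms(1)]) auto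
  have "(D has_integral (mean n (f 1) - mean n (f 0))) {0..1}"
    by (rule fundamental_theorem_of_calculus_interior_strong[OF finSS _ deriv cont]) auto
  then have I: "(D has_integral (mean n f1 - mean n f0)) {0..1}"
    using assms(1) by (simp add: paths_def)
  from vf have "AE t in lebesgue_on {0..1}. \<forall>k\<le>n.
        ((\<lambda>s. f s k) has_real_derivative (- nabla1 (flux n \<alpha> f v t) k)) (at t within {0..1})"
    by (simp add: velocity_field_def)
  then obtain N where N: "negligible N" and NP: "\<And>x. x \<in> {0..1} \<Longrightarrow> x \<notin> N \<Longrightarrow> \<forall>k\<le>n.
        ((\<lambda>s. f s k) has_real_derivative (- nabla1 (flux n \<alpha> f v x) k)) (at x within {0..1})"
    by (rule ae_lebesgue_on_negligible) auto
  show ?thesis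
  proof (rule has_integral_spike[OF _ _ I])
    show "negligible (N \<union> SS \<union> {0,1})"
      using N finSS by (auto intro: negligible_finite)
  next
    fix x assume x: "x \<in> {0..1} - (N \<union> SS \<union> {0,1})"
    then have x01: "0 < x" "x < 1" by auto
    have "vector_derivative (\<lambda>t. f t k) (at x) = - nabla1 (flux n \<alpha> f v x) k" if "k \<le> n" for k
    proof -
      have "((\<lambda>s. f s k) has_real_derivative (- nabla1 (flux n \<alpha> f v x) k)) (at x)"
        using NP[of x] x that x01 by (auto simp: at_within_Icc_at)
      then show ?thesis
        by (intro vector_derivative_at) (simp add: has_real_derivative_iff_has_vector_derivative)
    qed
    then have "D x = (\<Sum>k\<le>n. real k * (- nabla1 (flux n \<alpha> f v x) k))"
      by (simp add: D_def)
    also have "\<dots> = (\<Sum>k<n. flux n \<alpha> f v x k)"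
      by (rule sum_by_parts_flux) (simp add: flux_def)
    finally show "(\<Sum>k<n. flux n \<alpha> f v x k) = D x" by simp
  qed
qed


abbreviation "L01 \<equiv> lebesgue_on {0..1::real}"

lemma L01_space: "space L01 = {0..1}" by simp

lemma L01_finite: "finite_measure L01"
  by (rule finite_measure_lebesgue_on) auto

lemma L01_measure: "measure L01 {0..1} = 1"
  by (simp add: measure_restrict_space)

lemma L01_integral_const: "(\<integral>x. c \<partial>L01) = (c::real)"
proof -
  have "measure L01 (space L01) = 1" using L01_measure by simp
  then show ?thesis by (simp add: lebesgue_integral_const)
qed

lemma L01_integrable_const: "integrable L01 (\<lambda>x. c::real)"
  using L01_finite finite_measure.integrable_const by blast

lemma gcoef_nonneg:
  assumes "f \<in> paths n f0 f1" "\<alpha> \<in> coeffs n" "t \<in> {0..1}" "k < n"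
  shows "0 \<le> gcoef \<alpha> f t k"
proof -
  have p: "pmf_on n (f t)" using assms by (auto simp: paths_def)
  have "0 \<le> \<alpha> t (k+1)" "0 \<le> \<alpha> t k" "\<alpha> t k \<le> 1"
    using assms by (auto simp: coeffs_def)
  moreover have "0 \<le> f t (k+1)" "0 \<le> f t k" using p by (auto simp: pmf_on_def)
  ultimately show ?thesis unfolding gcoef_def by (intro add_nonneg_nonneg mult_nonneg_nonneg) auto
qed

lemma gcoef_sum:
  assumes "f \<in> paths n f0 f1" "\<alpha> \<in> coeffs n" "t \<in> {0..1}"
  shows "(\<Sum>k<n. gcoef \<alpha> f t k) = 1"
proof -
  have p: "pmf_on n (f t)" using assms by (auto simp: paths_def)
  have "\<alpha> t 0 = 0" "\<alpha> t n = 1" using assms by (auto simp: coeffs_def)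
  then show ?thesis unfolding gcoef_def
    by (intro sum_gcoef_gen) (use p in \<open>auto simp: pmf_on_def\<close>)
qed

lemma meas_f:
  assumes "f \<in> paths n f0 f1" "k \<le> n"
  shows "(\<lambda>t. f t k) \<in> borel_measurable L01"
  by (rule continuous_imp_measurable_on_sets_lebesgue[OF paths_cont[OF assms]]) auto

lemma meas_gcoef:
  assumes "f \<in> paths n f0 f1" "\<alpha> \<in> coeffs n" "k < n"
  shows "(\<lambda>t. gcoef \<alpha> f t k) \<in> borel_measurable L01"
proof -
  have "(\<lambda>t. \<alpha> t j) \<in> borel_measurable L01" if "j \<le> n" for j
    using assms(2) that by (auto simp: coeffs_def)
  moreover have "(\<lambda>t. f t j) \<in> borel_measurable L01" if "j \<le> n" for j
    using meas_f[OF assms(1) that] .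
  ultimately have m: "(\<lambda>t. \<alpha> t (k+1)) \<in> borel_measurable L01" "(\<lambda>t. \<alpha> t k) \<in> borel_measurable L01"
     "(\<lambda>t. f t (k+1)) \<in> borel_measurable L01" "(\<lambda>t. f t k) \<in> borel_measurable L01"
    using assms(3) by auto
  show ?thesis unfolding gcoef_def using m by measurable
qed

lemma meas_v:
  assumes "velocity_field n f \<alpha> v" "k < n"
  shows "(\<lambda>t. v t k) \<in> borel_measurable L01"
  using assms by (auto simp: velocity_field_def)

definition W :: "nat \<Rightarrow> (real \<Rightarrow> nat \<Rightarrow> real) \<Rightarrow> (real \<Rightarrow> nat \<Rightarrow> real)
    \<Rightarrow> (real \<Rightarrow> nat \<Rightarrow> real) \<Rightarrow> real \<Rightarrow> real" where
  "W n f \<alpha> v t = (\<Sum>k<n. flux n \<alpha> f v t k)"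

lemma W_eq: "W n f \<alpha> v t = (\<Sum>k<n. gcoef \<alpha> f t k * v t k)"
  by (simp add: W_def flux_def mult.commute)

lemma meas_beta:
  assumes "f \<in> paths n f0 f1" "\<alpha> \<in> coeffs n" "velocity_field n f \<alpha> v"
  shows "beta n f \<alpha> v \<in> borel_measurable L01"
  unfolding beta_def[abs_def] using assms
  by (intro borel_measurable_sum borel_measurable_times borel_measurable_power meas_gcoef meas_v) auto

lemma meas_W:
  assumes "f \<in> paths n f0 f1" "\<alpha> \<in> coeffs n" "velocity_field n f \<alpha> v"
  shows "W n f \<alpha> v \<in> borel_measurable L01"
  unfolding W_eq[abs_def] using assms
  by (intro borel_measurable_sum borel_measurable_times meas_gcoef meas_v) auto

lemma cs_identity:
  fixes g v :: "nat \<Rightarrow> real"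
  assumes "(\<Sum>k<n. g k) = 1"
  shows "(\<Sum>k<n. g k * (v k - w)^2) = (\<Sum>k<n. g k * (v k)^2) - 2 * w * (\<Sum>k<n. g k * v k) + w^2"
proof -
  have "(\<Sum>k<n. g k * (v k - w)^2) = (\<Sum>k<n. g k * (v k)^2 - 2 * w * (g k * v k) + w^2 * g k)"
    by (intro sum.cong) (auto simp: power2_eq_square algebra_simps)
  also have "\<dots> = (\<Sum>k<n. g k * (v k)^2) - 2 * w * (\<Sum>k<n. g k * v k) + w^2 * (\<Sum>k<n. g k)"
    by (simp add: sum.distrib sum_subtractf sum_distrib_left)
  finally show ?thesis using assms by simp
qed

lemma W_sq_le_beta:
  assumes "f \<in> paths n f0 f1" "\<alpha> \<in> coeffs n" "t \<in> {0..1}"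
  shows "(W n f \<alpha> v t)^2 \<le> beta n f \<alpha> v t"
    and "beta n f \<alpha> v t - (W n f \<alpha> v t)^2 = (\<Sum>k<n. gcoef \<alpha> f t k * (v t k - W n f \<alpha> v t)^2)"
proof -
  have e: "(\<Sum>k<n. gcoef \<alpha> f t k * (v t k - W n f \<alpha> v t)^2)
     = beta n f \<alpha> v t - 2 * W n f \<alpha> v t * W n f \<alpha> v t + (W n f \<alpha> v t)^2"
    unfolding beta_def W_eq[of n f \<alpha> v t] by (rule cs_identity[OF gcoef_sum[OF assms]])
  then show "beta n f \<alpha> v t - (W n f \<alpha> v t)^2 = (\<Sum>k<n. gcoef \<alpha> f t k * (v t k - W n f \<alpha> v t)^2)"
    by (simp add: power2_eq_square)
  have "0 \<le> (\<Sum>k<n. gcoef \<alpha> f t k * (v t k - W n f \<alpha> v t)^2)"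
    using gcoef_nonneg[OF assms] by (intro sum_nonneg mult_nonneg_nonneg) auto
  then show "(W n f \<alpha> v t)^2 \<le> beta n f \<alpha> v t" using e by (simp add: power2_eq_square)
qed

lemma beta_nonneg:
  assumes "f \<in> paths n f0 f1" "\<alpha> \<in> coeffs n" "t \<in> {0..1}"
  shows "0 \<le> beta n f \<alpha> v t"
  using W_sq_le_beta(1)[OF assms, of v] by (smt (verit) zero_le_power2)


lemma AE_L01: "(\<And>x. x \<in> {0..1} \<Longrightarrow> P x) \<Longrightarrow> AE x in L01. P x"
  by (rule AE_I2) simp

lemma abs_le_1_sq: "\<bar>x::real\<bar> \<le> 1 + x^2"
proof -
  have "0 \<le> (\<bar>x\<bar> - 1)^2" by simp
  then have "0 \<le> x^2 - 2 * \<bar>x\<bar> + 1" by (simp add: power2_diff power2_abs)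
  then show ?thesis by (smt (verit) abs_ge_zero)
qed

lemma adm_integrals:
  assumes p: "f \<in> paths n f0 f1" and c: "\<alpha> \<in> coeffs n" and vf: "velocity_field n f \<alpha> v"
    and fin: "path_length_sq n f \<alpha> v \<noteq> \<infinity>"
  shows "integrable L01 (beta n f \<alpha> v)"
    and "integrable L01 (\<lambda>t. (W n f \<alpha> v t)^2)"
    and "integrable L01 (W n f \<alpha> v)"
    and "path_length_sq n f \<alpha> v = ennreal (\<integral>t. beta n f \<alpha> v t \<partial>L01)"
    and "(\<integral>t. W n f \<alpha> v t \<partial>L01) = mean n f1 - mean n f0"
proof -
  have mb: "beta n f \<alpha> v \<in> borel_measurable L01" by (rule meas_beta[OF p c vf])
  have mW: "W n f \<alpha> v \<in> borel_measurable L01" by (rule meas_W[OF p c vf])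
  have nn: "AE t in L01. 0 \<le> beta n f \<alpha> v t" by (rule AE_L01) (rule beta_nonneg[OF p c])
  show ib: "integrable L01 (beta n f \<alpha> v)"
    by (rule integrableI_nonneg[OF mb nn]) (use fin in \<open>simp add: path_length_sq_def top.not_eq_extremum\<close>)
  show iW2: "integrable L01 (\<lambda>t. (W n f \<alpha> v t)^2)"
  proof (rule Bochner_Integration.integrable_bound[OF ib])
    show "(\<lambda>t. (W n f \<alpha> v t)^2) \<in> borel_measurable L01" using mW by measurable
    show "AE x in L01. norm ((W n f \<alpha> v x)^2) \<le> norm (beta n f \<alpha> v x)"
      by (rule AE_L01) (use W_sq_le_beta(1)[OF p c] beta_nonneg[OF p c] in auto)
  qed
  show iW: "integrable L01 (W n f \<alpha> v)"
  proof (rule Bochner_Integration.integrable_bound[OF Bochner_Integration.integrable_add[OF L01_integrable_const[of 1] iW2] mW])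
    show "AE x in L01. norm (W n f \<alpha> v x) \<le> norm (1 + (W n f \<alpha> v x)^2)"
    proof (rule AE_I2)
      fix x
      have "\<bar>W n f \<alpha> v x\<bar> \<le> 1 + (W n f \<alpha> v x)^2"
        by (rule abs_le_1_sq)
      then show "norm (W n f \<alpha> v x) \<le> norm (1 + (W n f \<alpha> v x)^2)" by simp
    qed
  qed
  show "path_length_sq n f \<alpha> v = ennreal (\<integral>t. beta n f \<alpha> v t \<partial>L01)"
    unfolding path_length_sq_def by (rule nn_integral_eq_integral[OF ib nn])
  have "(W n f \<alpha> v has_integral (\<integral>t. W n f \<alpha> v t \<partial>L01)) {0..1}"
    by (rule has_integral_integral_lebesgue_on[OF iW]) auto
  moreover have "(W n f \<alpha> v has_integral (mean n f1 - mean n f0)) {0..1}"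
    using ftc_mean[OF p vf] by (simp add: W_def[abs_def])
  ultimately show "(\<integral>t. W n f \<alpha> v t \<partial>L01) = mean n f1 - mean n f0"
    by (rule has_integral_unique)
qed

lemma var_identity:
  assumes iW: "integrable L01 (X::real\<Rightarrow>real)" and iW2: "integrable L01 (\<lambda>t. (X t)^2)"
  shows "(\<integral>t. (X t - (\<integral>t. X t \<partial>L01))^2 \<partial>L01) = (\<integral>t. (X t)^2 \<partial>L01) - (\<integral>t. X t \<partial>L01)^2"
proof -
  define c where "c = (\<integral>t. X t \<partial>L01)"
  have e: "(\<lambda>t. (X t - c)^2) = (\<lambda>t. ((X t)^2 - 2 * c * X t) + c^2)"
    by (auto simp: power2_eq_square algebra_simps)
  have "(\<integral>t. (X t - c)^2 \<partial>L01) = (\<integral>t. ((X t)^2 - 2 * c * X t) \<partial>L01) + (\<integral>t. c^2 \<partial>L01)"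
    unfolding e using iW iW2 L01_integrable_const by (intro Bochner_Integration.integral_add) auto
  also have "\<dots> = (\<integral>t. (X t)^2 \<partial>L01) - 2 * c * c + c^2"
    using iW iW2 by (subst Bochner_Integration.integral_diff) (auto simp: L01_integral_const c_def L01_measure)
  finally show ?thesis by (simp add: c_def power2_eq_square)
qed

lemma lower_bound_adm:
  assumes p: "f \<in> paths n f0 f1" and c: "\<alpha> \<in> coeffs n" and vf: "velocity_field n f \<alpha> v"
  shows "ennreal ((mean n f1 - mean n f0)^2) \<le> path_length_sq n f \<alpha> v"
proof (cases "path_length_sq n f \<alpha> v = \<infinity>")
  case True then show ?thesis by simp
next
  case False
  note I = adm_integrals[OF p c vf False]
  have v0: "0 \<le> (\<integral>t. (W n f \<alpha> v t - (mean n f1 - mean n f0))^2 \<partial>L01)"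
    by (rule integral_nonneg_AE) auto
  have vi: "(\<integral>t. (W n f \<alpha> v t - (mean n f1 - mean n f0))^2 \<partial>L01) = (\<integral>t. (W n f \<alpha> v t)^2 \<partial>L01) - (mean n f1 - mean n f0)^2"
    using var_identity[OF I(3) I(2)] I(5) by simp
  have "(mean n f1 - mean n f0)^2 \<le> (\<integral>t. (W n f \<alpha> v t)^2 \<partial>L01)"
    using v0 vi by linarith
  also have "\<dots> \<le> (\<integral>t. beta n f \<alpha> v t \<partial>L01)"
    by (rule integral_mono_AE[OF I(2) I(1)]) (rule AE_L01, rule W_sq_le_beta(1)[OF p c])
  finally show ?thesis using I(4) by (simp add: ennreal_leI)
qed

lemma equality_adm:
  assumes p: "f \<in> paths n f0 f1" and c: "\<alpha> \<in> coeffs n" and vf: "velocity_field n f \<alpha> v"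
    and eq: "path_length_sq n f \<alpha> v = ennreal ((mean n f1 - mean n f0)^2)"
  shows "AE t in L01. \<forall>k<n. gcoef \<alpha> f t k \<noteq> 0 \<longrightarrow> v t k = mean n f1 - mean n f0"
proof -
  define d where "d = mean n f1 - mean n f0"
  have fin: "path_length_sq n f \<alpha> v \<noteq> \<infinity>" using eq by simp
  note I = adm_integrals[OF p c vf fin]
  have Ib: "(\<integral>t. beta n f \<alpha> v t \<partial>L01) = d^2"
    using eq I(4) integral_nonneg_AE[OF AE_L01, of "beta n f \<alpha> v"] beta_nonneg[OF p c]
    by (auto simp: d_def AE_L01)
  have v0: "0 \<le> (\<integral>t. (W n f \<alpha> v t - d)^2 \<partial>L01)"
    by (rule integral_nonneg_AE) auto
  have vi: "(\<integral>t. (W n f \<alpha> v t - d)^2 \<partial>L01) = (\<integral>t. (W n f \<alpha> v t)^2 \<partial>L01) - d^2"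
    using var_identity[OF I(3) I(2)] I(5) by (simp add: d_def)
  have le: "(\<integral>t. (W n f \<alpha> v t)^2 \<partial>L01) \<le> (\<integral>t. beta n f \<alpha> v t \<partial>L01)"
    by (rule integral_mono_AE[OF I(2) I(1)]) (rule AE_L01, rule W_sq_le_beta(1)[OF p c])
  have z1: "(\<integral>t. (W n f \<alpha> v t - d)^2 \<partial>L01) = 0" using v0 vi le Ib by linarith
  have z2: "(\<integral>t. beta n f \<alpha> v t - (W n f \<alpha> v t)^2 \<partial>L01) = 0"
    using v0 vi le Ib I(1) I(2) by (subst Bochner_Integration.integral_diff) auto
  have int1: "integrable L01 (\<lambda>t. (W n f \<alpha> v t - d)^2)"
  proof -
    have e: "(\<lambda>t. (W n f \<alpha> v t - d)^2) = (\<lambda>t. ((W n f \<alpha> v t)^2 - 2 * d * W n f \<alpha> v t) + d^2)"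
      by (auto simp: power2_eq_square algebra_simps)
    show ?thesis unfolding e using I(2,3) L01_integrable_const by auto
  qed
  have A1: "AE t in L01. (W n f \<alpha> v t - d)^2 = 0"
    using z1 integral_nonneg_eq_0_iff_AE[OF int1] by auto
  have Wle: "AE t in L01. (W n f \<alpha> v t)^2 \<le> beta n f \<alpha> v t"
    by (rule AE_L01) (rule W_sq_le_beta(1)[OF p c])
  have idiff: "integrable L01 (\<lambda>t. beta n f \<alpha> v t - (W n f \<alpha> v t)^2)" using I(1) I(2) by auto
  have "AE t in L01. 0 \<le> beta n f \<alpha> v t - (W n f \<alpha> v t)^2" using Wle by eventually_elim simp
  then have A2: "AE t in L01. beta n f \<alpha> v t - (W n f \<alpha> v t)^2 = 0"
    using z2 integral_nonneg_eq_0_iff_AE[OF idiff] by simp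
  have A3: "AE t in L01. t \<in> {0..1}" by (rule AE_L01)
  from A1 A2 A3 show ?thesis
  proof eventually_elim
    case (elim t)
    have Wd: "W n f \<alpha> v t = d" using elim(1) by simp
    have s: "(\<Sum>k<n. gcoef \<alpha> f t k * (v t k - W n f \<alpha> v t)^2) = 0"
      using W_sq_le_beta(2)[OF p c elim(3), of v] elim(2) by simp
    have "gcoef \<alpha> f t k * (v t k - W n f \<alpha> v t)^2 = 0" if "k < n" for k
      using s that sum_nonneg_eq_0_iff[of "{..<n}" "\<lambda>k. gcoef \<alpha> f t k * (v t k - W n f \<alpha> v t)^2"]
        gcoef_nonneg[OF p c elim(3)] by auto
    then show ?case using Wd by (auto simp: d_def)
  qed
qed

lemma equality_adm_conv:
  assumes p: "f \<in> paths n f0 f1" and c: "\<alpha> \<in> coeffs n" and vf: "velocity_field n f \<alpha> v"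
    and ae: "AE t in L01. \<forall>k<n. gcoef \<alpha> f t k \<noteq> 0 \<longrightarrow> v t k = d"
  shows "path_length_sq n f \<alpha> v = ennreal (d^2)" and "mean n f1 - mean n f0 = d"
proof -
  have A3: "AE t in L01. t \<in> {0..1}" by (rule AE_L01)
  have A: "AE t in L01. beta n f \<alpha> v t = d^2 \<and> W n f \<alpha> v t = d"
    using ae A3
  proof eventually_elim
    case (elim t)
    have "beta n f \<alpha> v t = (\<Sum>k<n. gcoef \<alpha> f t k * d^2)"
      unfolding beta_def using elim(1) by (intro sum.cong) auto
    moreover have "W n f \<alpha> v t = (\<Sum>k<n. gcoef \<alpha> f t k * d)"
      unfolding W_eq using elim(1) by (intro sum.cong) auto
    ultimately show ?case using gcoef_sum[OF p c] elim(2)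
      by (simp add: sum_distrib_right[symmetric])
  qed
  have "path_length_sq n f \<alpha> v = (\<integral>\<^sup>+ t. ennreal (d^2) \<partial>L01)"
    unfolding path_length_sq_def by (rule nn_integral_cong_AE) (use A in auto)
  also have "\<dots> = ennreal (d^2)"
    by (simp add: emeasure_restrict_space)
  finally show pl: "path_length_sq n f \<alpha> v = ennreal (d^2)" .
  note I = adm_integrals[OF p c vf, unfolded pl, simplified]
  have "(\<integral>t. W n f \<alpha> v t \<partial>L01) = (\<integral>t. d \<partial>L01)"
    by (rule integral_cong_AE) (use A meas_W[OF p c vf] in auto)
  then show "mean n f1 - mean n f0 = d" using I(5) L01_integral_const by simp
qed


lemma Vn_sq_lower:
  shows "ennreal ((mean n f1 - mean n f0)^2) \<le> Vn_sq n f0 f1"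
  unfolding Vn_sq_def by (rule Inf_greatest) (auto intro: lower_bound_adm)

lemma Vn_lower: "ennreal \<bar>mean n f0 - mean n f1\<bar> \<le> Vn n f0 f1"
proof (cases "Vn_sq n f0 f1 = \<infinity>")
  case True then show ?thesis by (simp add: Vn_def)
next
  case False
  define r where "r = enn2real (Vn_sq n f0 f1)"
  have r: "Vn_sq n f0 f1 = ennreal r" "0 \<le> r" using False by (auto simp: r_def less_top)
  have "(mean n f1 - mean n f0)^2 \<le> r" using Vn_sq_lower[of n f1 f0] r by simp
  then have "\<bar>mean n f0 - mean n f1\<bar> \<le> sqrt r"
    by (metis abs_minus_commute real_le_rsqrt power2_abs)
  then show ?thesis using False by (simp add: Vn_def r_def ennreal_leI)
qed

lemma Vn_eq_iff:
  assumes g: "is_geodesic n f0 f1 f \<alpha> v"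
  shows "Vn n f0 f1 = ennreal \<bar>mean n f0 - mean n f1\<bar> \<longleftrightarrow>
         (\<exists>c. AE t in lebesgue_on {0..1}. \<forall>k<n. gcoef \<alpha> f t k \<noteq> 0 \<longrightarrow> v t k = c)"
proof -
  have p: "f \<in> paths n f0 f1" and c: "\<alpha> \<in> coeffs n" and vf: "velocity_field n f \<alpha> v"
    and pl: "path_length_sq n f \<alpha> v = Vn_sq n f0 f1"
    using g by (auto simp: is_geodesic_def)
  show ?thesis
  proof
    assume eq: "Vn n f0 f1 = ennreal \<bar>mean n f0 - mean n f1\<bar>"
    then have F: "Vn_sq n f0 f1 \<noteq> \<infinity>" by (auto simp: Vn_def)
    define r where "r = enn2real (Vn_sq n f0 f1)"
    have r: "Vn_sq n f0 f1 = ennreal r" "0 \<le> r" using F by (auto simp: r_def less_top)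
    have "sqrt r = \<bar>mean n f0 - mean n f1\<bar>" using eq F by (simp add: Vn_def r_def)
    then have "r = (mean n f1 - mean n f0)^2"
      using r(2) by (metis abs_minus_commute power2_abs real_sqrt_pow2)
    then have "path_length_sq n f \<alpha> v = ennreal ((mean n f1 - mean n f0)^2)" using pl r by simp
    then show "\<exists>c. AE t in lebesgue_on {0..1}. \<forall>k<n. gcoef \<alpha> f t k \<noteq> 0 \<longrightarrow> v t k = c"
      using equality_adm[OF p c vf] by blast
  next
    assume "\<exists>c. AE t in lebesgue_on {0..1}. \<forall>k<n. gcoef \<alpha> f t k \<noteq> 0 \<longrightarrow> v t k = c"
    then obtain d where d: "AE t in L01. \<forall>k<n. gcoef \<alpha> f t k \<noteq> 0 \<longrightarrow> v t k = d" by blast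
    note E = equality_adm_conv[OF p c vf d]
    have "Vn_sq n f0 f1 = ennreal (d^2)" using E(1) pl by simp
    then show "Vn n f0 f1 = ennreal \<bar>mean n f0 - mean n f1\<bar>"
      using E(2) by (simp add: Vn_def abs_minus_commute)
  qed
qed


definition cA :: "real \<Rightarrow> real" where "cA t = (1-t)^2*(1+2*t) - t^2*(1-t)^2/2"
definition cW :: "real \<Rightarrow> real" where "cW t = t^2*(1-t)^2"
definition cC :: "real \<Rightarrow> real" where "cC t = t^2*(3-2*t) - t^2*(1-t)^2/2"
definition dA :: "real \<Rightarrow> real" where "dA t = t*(1-t)*(2*t-7)"
definition dW :: "real \<Rightarrow> real" where "dW t = 2*t*(1-t)*(1-2*t)"
definition dC :: "real \<Rightarrow> real" where "dC t = t*(1-t)*(5+2*t)"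

lemma cAWC_sum: "cA t + cW t + cC t = 1"
  by (simp add: cA_def cW_def cC_def power2_eq_square algebra_simps)

lemma dAWC_sum: "dA t + dW t + dC t = 0"
  by (simp add: dA_def dW_def dC_def algebra_simps)

lemma cA_deriv: "(cA has_real_derivative dA t) (at t)"
proof -
  have "((\<lambda>t. (1-t)^2*(1+2*t) - t^2*(1-t)^2/2) has_real_derivative
      (2*(1-t)*(-1)*(1+2*t) + (1-t)^2*2 - (2*t*(1-t)^2 + t^2*(2*(1-t)*(-1)))/2)) (at t)"
    by (auto intro!: derivative_eq_intros)
  moreover have "(2*(1-t)*(-1)*(1+2*t) + (1-t)^2*2 - (2*t*(1-t)^2 + t^2*(2*(1-t)*(-1)))/2) = dA t"
    by (simp add: dA_def power2_eq_square field_simps)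
  ultimately show ?thesis by (simp add: cA_def[abs_def])
qed

lemma cW_deriv: "(cW has_real_derivative dW t) (at t)"
proof -
  have "((\<lambda>t. t^2*(1-t)^2) has_real_derivative (2*t*(1-t)^2 + t^2*(2*(1-t)*(-1)))) (at t)"
    by (auto intro!: derivative_eq_intros)
  moreover have "2*t*(1-t)^2 + t^2*(2*(1-t)*(-1)) = dW t"
    by (simp add: dW_def power2_eq_square field_simps)
  ultimately show ?thesis by (simp add: cW_def[abs_def])
qed

lemma cC_deriv: "(cC has_real_derivative dC t) (at t)"
proof -
  have "((\<lambda>t. t^2*(3-2*t) - t^2*(1-t)^2/2) has_real_derivative
     (2*t*(3-2*t) + t^2*(-2) - (2*t*(1-t)^2 + t^2*(2*(1-t)*(-1)))/2)) (at t)"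
    by (auto intro!: derivative_eq_intros)
  moreover have "(2*t*(3-2*t) + t^2*(-2) - (2*t*(1-t)^2 + t^2*(2*(1-t)*(-1)))/2) = dC t"
    by (simp add: dC_def power2_eq_square field_simps)
  ultimately show ?thesis by (simp add: cC_def[abs_def])
qed

lemma cA_nonneg: "t \<in> {0..1} \<Longrightarrow> 0 \<le> cA t"
proof -
  assume t: "t \<in> {0..1}"
  have "cA t = (1-t)^2 * ((1+2*t) - t^2/2)" by (simp add: cA_def algebra_simps)
  moreover have "t^2 \<le> 1" using t by (simp add: power_le_one)
  then have "0 \<le> (1+2*t) - t^2/2" using t by auto
  ultimately show ?thesis by simp
qed

lemma cC_nonneg: "t \<in> {0..1} \<Longrightarrow> 0 \<le> cC t"
proof -
  assume t: "t \<in> {0..1}"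
  have "cC t = t^2 * ((3-2*t) - (1-t)^2/2)" by (simp add: cC_def algebra_simps)
  moreover have "(1-t)^2 \<le> 1" using t by (auto simp: power2_eq_square intro: mult_le_one)
  then have "0 \<le> (3-2*t) - (1-t)^2/2" using t by auto
  ultimately show ?thesis by simp
qed

lemma cW_nonneg: "0 \<le> cW t" by (simp add: cW_def)

lemma abs_dA: "t \<in> {0..1} \<Longrightarrow> \<bar>dA t\<bar> \<le> 7 * (t*(1-t))"
proof -
  assume t: "t \<in> {0..1}"
  have q: "0 \<le> t*(1-t)" using t by auto
  have "dA t = (t*(1-t)) * (2*t-7)" by (simp add: dA_def)
  then have "\<bar>dA t\<bar> = t*(1-t) * \<bar>2*t-7\<bar>" using t by (simp add: abs_mult)
  also have "\<dots> \<le> t*(1-t) * 7" using t q by (intro mult_left_mono) auto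
  finally show ?thesis by simp
qed

lemma abs_dW: "t \<in> {0..1} \<Longrightarrow> \<bar>dW t\<bar> \<le> 2 * (t*(1-t))"
proof -
  assume t: "t \<in> {0..1}"
  have q: "0 \<le> t*(1-t)" using t by auto
  have "dW t = (t*(1-t)) * (2*(1-2*t))" by (simp add: dW_def)
  then have "\<bar>dW t\<bar> = t*(1-t) * \<bar>2*(1-2*t)\<bar>" using t by (simp add: abs_mult)
  also have "\<dots> \<le> t*(1-t) * 2" using t q by (intro mult_left_mono) auto
  finally show ?thesis by simp
qed

lemma abs_dC: "t \<in> {0..1} \<Longrightarrow> \<bar>dC t\<bar> \<le> 7 * (t*(1-t))"
proof -
  assume t: "t \<in> {0..1}"
  have q: "0 \<le> t*(1-t)" using t by auto
  have "dC t = (t*(1-t)) * (5+2*t)" by (simp add: dC_def)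
  then have "\<bar>dC t\<bar> = t*(1-t) * \<bar>5+2*t\<bar>" using t by (simp add: abs_mult)
  also have "\<dots> \<le> t*(1-t) * 7" using t q by (intro mult_left_mono) auto
  finally show ?thesis by simp
qed

lemma cW_eq: "cW t = (t*(1-t))^2" by (simp add: cW_def power_mult_distrib)


definition uu :: "nat \<Rightarrow> nat \<Rightarrow> real" where "uu n k = (if k \<le> n then 1 / (real n + 1) else 0)"
definition fp :: "nat \<Rightarrow> (nat \<Rightarrow> real) \<Rightarrow> (nat \<Rightarrow> real) \<Rightarrow> real \<Rightarrow> nat \<Rightarrow> real" where
  "fp n f0 f1 t k = cA t * f0 k + cW t * uu n k + cC t * f1 k"
definition fd :: "nat \<Rightarrow> (nat \<Rightarrow> real) \<Rightarrow> (nat \<Rightarrow> real) \<Rightarrow> real \<Rightarrow> nat \<Rightarrow> real" where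
  "fd n f0 f1 t k = dA t * f0 k + dW t * uu n k + dC t * f1 k"
definition Fl :: "nat \<Rightarrow> (nat \<Rightarrow> real) \<Rightarrow> (nat \<Rightarrow> real) \<Rightarrow> real \<Rightarrow> nat \<Rightarrow> real" where
  "Fl n f0 f1 t k = - (\<Sum>j\<le>k. fd n f0 f1 t j)"
definition ap :: "nat \<Rightarrow> real \<Rightarrow> nat \<Rightarrow> real" where
  "ap n t k = (if k = 0 then 0 else if n \<le> k then 1 else 1/2)"
definition vp :: "nat \<Rightarrow> (nat \<Rightarrow> real) \<Rightarrow> (nat \<Rightarrow> real) \<Rightarrow> real \<Rightarrow> nat \<Rightarrow> real" where
  "vp n f0 f1 t k = Fl n f0 f1 t k / gcoef (ap n) (fp n f0 f1) t k"

lemma uu_sum: "(\<Sum>k\<le>n. uu n k) = 1"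
  by (simp add: uu_def)

lemma uu_nonneg: "0 \<le> uu n k" by (simp add: uu_def)

lemma pmf_sum: "pmf_on n p \<Longrightarrow> (\<Sum>k\<le>n. p k) = 1" by (simp add: pmf_on_def)

lemma pmf_partial: assumes "pmf_on n p" shows "0 \<le> (\<Sum>j\<le>k. p j)" "k \<le> n \<Longrightarrow> (\<Sum>j\<le>k. p j) \<le> 1"
proof -
  show "0 \<le> (\<Sum>j\<le>k. p j)" using assms by (auto simp: pmf_on_def intro: sum_nonneg)
  assume "k \<le> n"
  then have "(\<Sum>j\<le>k. p j) \<le> (\<Sum>j\<le>n. p j)"
    using assms by (intro sum_mono2) (auto simp: pmf_on_def)
  then show "(\<Sum>j\<le>k. p j) \<le> 1" using assms by (simp add: pmf_on_def)
qed

lemma uu_partial: "0 \<le> (\<Sum>j\<le>k. uu n j)" "k \<le> n \<Longrightarrow> (\<Sum>j\<le>k. uu n j) \<le> 1"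
proof -
  have p: "pmf_on n (uu n)" by (auto simp: pmf_on_def uu_def)
  show "0 \<le> (\<Sum>j\<le>k. uu n j)" "k \<le> n \<Longrightarrow> (\<Sum>j\<le>k. uu n j) \<le> 1" using pmf_partial[OF p] by auto
qed

lemma fp_paths:
  assumes "pmf_on n f0" "pmf_on n f1"
  shows "fp n f0 f1 \<in> paths n f0 f1"
proof -
  have "pmf_on n (fp n f0 f1 t)" if t: "t \<in> {0..1}" for t
  proof -
    have nn: "0 \<le> cA t" "0 \<le> cW t" "0 \<le> cC t" using cA_nonneg[OF t] cW_nonneg cC_nonneg[OF t] by auto
    have "(\<Sum>k\<le>n. fp n f0 f1 t k) = cA t * (\<Sum>k\<le>n. f0 k) + cW t * (\<Sum>k\<le>n. uu n k) + cC t * (\<Sum>k\<le>n. f1 k)"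
      by (simp add: fp_def sum.distrib sum_distrib_left)
    also have "\<dots> = 1" using assms cAWC_sum[of t] by (simp add: pmf_sum uu_sum)
    finally show ?thesis using assms nn
      by (auto simp: pmf_on_def fp_def uu_def intro!: add_nonneg_nonneg mult_nonneg_nonneg)
  qed
  moreover have "(\<lambda>t. fp n f0 f1 t k) piecewise_differentiable_on {0..1}" for k
  proof (rule differentiable_imp_piecewise_differentiable)
    fix x
    have "((\<lambda>t. fp n f0 f1 t k) has_real_derivative fd n f0 f1 x k) (at x)"
      unfolding fp_def[abs_def] fd_def
      by (intro DERIV_add DERIV_cmult_right cA_deriv cW_deriv cC_deriv)
    then show "(\<lambda>t. fp n f0 f1 t k) differentiable at x within {0..1}"
      using real_differentiable_def differentiable_at_withinI by blast
  qed
  moreover have "fp n f0 f1 0 = f0" "fp n f0 f1 1 = f1"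
    by (auto simp: fp_def cA_def cW_def cC_def fun_eq_iff)
  ultimately show ?thesis by (auto simp: paths_def)
qed

lemma fp_deriv: "((\<lambda>t. fp n f0 f1 t k) has_real_derivative fd n f0 f1 x k) (at x)"
  unfolding fp_def[abs_def] fd_def by (intro DERIV_add DERIV_cmult_right cA_deriv cW_deriv cC_deriv)

lemma ap_coeffs: assumes "1 \<le> n" shows "ap n \<in> coeffs n"
  using assms by (auto simp: coeffs_def ap_def)

lemma gcoef_lower:
  assumes "pmf_on n f0" "pmf_on n f1" "t \<in> {0..1}" "k < n"
  shows "cW t / (2 * (real n + 1)) \<le> gcoef (ap n) (fp n f0 f1) t k"
proof -
  have nn: "0 \<le> cA t" "0 \<le> cW t" "0 \<le> cC t" using cA_nonneg[OF assms(3)] cW_nonneg cC_nonneg[OF assms(3)] by auto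
  have fnn: "0 \<le> f0 j" "0 \<le> f1 j" for j using assms by (auto simp: pmf_on_def)
  have a1: "1/2 \<le> ap n t (k+1)" "ap n t (k+1) \<le> 1" "0 \<le> ap n t k" "ap n t k \<le> 1" using assms(4) by (auto simp: ap_def)
  have fk: "0 \<le> fp n f0 f1 t k" using nn fnn by (auto simp: fp_def uu_def)
  have "cW t / (real n + 1) \<le> fp n f0 f1 t (k+1)"
    using nn fnn assms(4) by (auto simp: fp_def uu_def)
  then have "1/2 * (cW t / (real n + 1)) \<le> ap n t (k+1) * fp n f0 f1 t (k+1)"
    using a1 nn by (intro mult_mono) auto
  moreover have "0 \<le> (1 - ap n t k) * fp n f0 f1 t k" using a1 fk by auto
  ultimately show ?thesis by (simp add: gcoef_def)
qed

lemma fd_sum: assumes "pmf_on n f0" "pmf_on n f1" shows "(\<Sum>j\<le>n. fd n f0 f1 t j) = 0"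
proof -
  have "(\<Sum>j\<le>n. fd n f0 f1 t j) = dA t * (\<Sum>k\<le>n. f0 k) + dW t * (\<Sum>k\<le>n. uu n k) + dC t * (\<Sum>k\<le>n. f1 k)"
    by (simp add: fd_def sum.distrib sum_distrib_left)
  then show ?thesis using assms dAWC_sum[of t] by (simp add: pmf_sum uu_sum)
qed

lemma Fl_bound:
  assumes "pmf_on n f0" "pmf_on n f1" "t \<in> {0..1}" "k \<le> n"
  shows "\<bar>Fl n f0 f1 t k\<bar> \<le> 16 * (t * (1 - t))"
proof -
  have "Fl n f0 f1 t k = - (dA t * (\<Sum>j\<le>k. f0 j) + dW t * (\<Sum>j\<le>k. uu n j) + dC t * (\<Sum>j\<le>k. f1 j))"
    by (simp add: Fl_def fd_def sum.distrib sum_distrib_left)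
  then have "\<bar>Fl n f0 f1 t k\<bar> \<le> \<bar>dA t\<bar> * \<bar>\<Sum>j\<le>k. f0 j\<bar> + \<bar>dW t\<bar> * \<bar>\<Sum>j\<le>k. uu n j\<bar> + \<bar>dC t\<bar> * \<bar>\<Sum>j\<le>k. f1 j\<bar>"
    by (simp add: abs_mult[symmetric])
  also have "\<dots> \<le> \<bar>dA t\<bar> * 1 + \<bar>dW t\<bar> * 1 + \<bar>dC t\<bar> * 1"
    using pmf_partial[OF assms(1)] pmf_partial[OF assms(2)] uu_partial assms(4)
    by (intro add_mono mult_left_mono) auto
  also have "\<dots> \<le> 16 * (t * (1 - t))" using abs_dA[OF assms(3)] abs_dW[OF assms(3)] abs_dC[OF assms(3)] by simp
  finally show ?thesis .
qed


lemma AE_L01_finite: "finite S \<Longrightarrow> AE t in L01. t \<notin> S"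
proof -
  assume "finite S"
  then have "S \<in> null_sets lebesgue"
    using negligible_iff_null_sets negligible_finite by blast
  then have "AE t in lebesgue. t \<notin> S" by (rule AE_not_in)
  then show ?thesis by (subst AE_restrict_space_iff) (auto elim: AE_mp)
qed

lemma AE_L01_all: "AE x in L01. x \<in> {0..1}" by (rule AE_L01) simp

lemma gcoef_pos:
  assumes "pmf_on n f0" "pmf_on n f1" "t \<in> {0<..<1}" "k < n"
  shows "0 < gcoef (ap n) (fp n f0 f1) t k"
proof -
  have "0 < cW t" using assms(3) by (simp add: cW_def)
  then have "0 < cW t / (2 * (real n + 1))" by simp
  then show ?thesis using gcoef_lower[OF assms(1,2) _ assms(4), of t] assms(3) by auto
qed

lemma cont_fd: "continuous_on S (\<lambda>t. fd n f0 f1 t k)"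
  unfolding fd_def dA_def dW_def dC_def by (intro continuous_intros)

lemma cont_fp: "continuous_on S (\<lambda>t. fp n f0 f1 t k)"
  unfolding fp_def cA_def cW_def cC_def by (intro continuous_intros) auto

lemma vp_vf:
  assumes n: "1 \<le> n" and p0: "pmf_on n f0" and p1: "pmf_on n f1"
  shows "velocity_field n (fp n f0 f1) (ap n) (vp n f0 f1)"
  unfolding velocity_field_def
proof (intro conjI allI impI)
  fix k assume "k < n"
  have m1: "(\<lambda>t. Fl n f0 f1 t k) \<in> borel_measurable L01"
    unfolding Fl_def
    by (intro continuous_imp_measurable_on_sets_lebesgue continuous_intros cont_fd) auto
  have m2: "(\<lambda>t. gcoef (ap n) (fp n f0 f1) t k) \<in> borel_measurable L01"
    unfolding gcoef_def ap_def
    by (intro continuous_imp_measurable_on_sets_lebesgue continuous_intros cont_fp) auto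
  show "(\<lambda>t. vp n f0 f1 t k) \<in> borel_measurable L01"
    unfolding vp_def using m1 m2 by (rule borel_measurable_divide)
next
  have A: "AE t in L01. t \<notin> {0,1}" by (rule AE_L01_finite) auto
  show "AE t in L01. \<forall>k\<le>n. ((\<lambda>s. fp n f0 f1 s k) has_real_derivative
      - nabla1 (flux n (ap n) (fp n f0 f1) (vp n f0 f1) t) k) (at t within {0..1})"
    using A AE_L01_all
  proof eventually_elim
    case (elim t)
    then have t: "t \<in> {0<..<1}" by auto
    have fl: "flux n (ap n) (fp n f0 f1) (vp n f0 f1) t j = (if j < n then Fl n f0 f1 t j else 0)" for j
      by (cases "j < n") (use gcoef_pos[OF p0 p1 t, of j] in \<open>auto simp: flux_def vp_def\<close>)
    have "- nabla1 (flux n (ap n) (fp n f0 f1) (vp n f0 f1) t) k = fd n f0 f1 t k" if "k \<le> n" for k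
    proof (cases "k = n")
      case True
      obtain m where m: "n = Suc m" using n by (cases n) auto
      have "(\<Sum>j\<le>m. fd n f0 f1 t j) + fd n f0 f1 t n = 0"
        using fd_sum[OF p0 p1, of t] by (simp add: m)
      moreover
      have "nabla1 (flux n (ap n) (fp n f0 f1) (vp n f0 f1) t) n
           = flux n (ap n) (fp n f0 f1) (vp n f0 f1) t n - flux n (ap n) (fp n f0 f1) (vp n f0 f1) t m"
        by (simp add: nabla1_def m)
      moreover have "flux n (ap n) (fp n f0 f1) (vp n f0 f1) t n = 0" using fl[of n] by simp
      moreover have "flux n (ap n) (fp n f0 f1) (vp n f0 f1) t m = - (\<Sum>j\<le>m. fd n f0 f1 t j)"
        using fl[of m] by (simp add: m Fl_def)
      ultimately show ?thesis using True by simp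
    next
      case False
      then have "k < n" using that by auto
      show ?thesis
      proof (cases k)
        case 0
        then show ?thesis using \<open>k < n\<close> by (simp add: nabla1_def fl Fl_def)
      next
        case (Suc m)
        then have "m < n" using \<open>k < n\<close> by simp
        then show ?thesis using Suc \<open>k < n\<close> by (simp add: nabla1_def fl Fl_def)
      qed
    qed
    then show ?case by (auto intro: has_field_derivative_at_within fp_deriv)
  qed
qed

lemma beta_bound:
  assumes p0: "pmf_on n f0" and p1: "pmf_on n f1" and t: "t \<in> {0..1}"
  shows "beta n (fp n f0 f1) (ap n) (vp n f0 f1) t \<le> real n * (512 * (real n + 1))"
proof -
  define q where "q = t * (1 - t)"
  have q0: "0 \<le> q" using t by (auto simp: q_def)
  have trm: "gcoef (ap n) (fp n f0 f1) t k * (vp n f0 f1 t k)^2 \<le> 512 * (real n + 1)" if k: "k < n" for k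
  proof -
    define g where "g = gcoef (ap n) (fp n f0 f1) t k"
    define F where "F = Fl n f0 f1 t k"
    have Fb: "\<bar>F\<bar> \<le> 16 * q" using Fl_bound[OF p0 p1 t, of k] k by (simp add: F_def q_def)
    have gl: "q^2 / (2 * (real n + 1)) \<le> g" using gcoef_lower[OF p0 p1 t k] by (simp add: g_def q_def cW_eq)
    have e: "gcoef (ap n) (fp n f0 f1) t k * (vp n f0 f1 t k)^2 = F^2 / g"
      by (simp add: g_def F_def vp_def power2_eq_square)
    show ?thesis
    proof (cases "q = 0")
      case True
      then have "F = 0" using Fb by simp
      then show ?thesis unfolding e by simp
    next
      case False
      then have qp: "0 < q" using q0 by simp
      have gp: "0 < q^2 / (2 * (real n + 1))" using qp by simp
      have "F^2 \<le> (16 * q)^2" using Fb by (metis abs_ge_zero power2_abs power_mono)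
      then have "F^2 / g \<le> (16 * q)^2 / (q^2 / (2 * (real n + 1)))"
        using gp gl by (intro frac_le) auto
      also have "\<dots> = 512 * (real n + 1)" using qp by (simp add: power2_eq_square field_simps)
      finally show ?thesis using e by simp
    qed
  qed
  have "beta n (fp n f0 f1) (ap n) (vp n f0 f1) t \<le> (\<Sum>k<n. 512 * (real n + 1))"
    unfolding beta_def by (intro sum_mono trm) auto
  then show ?thesis by simp
qed

lemma Vn_sq_finite:
  assumes n: "1 \<le> n" and p0: "pmf_on n f0" and p1: "pmf_on n f1"
  shows "Vn_sq n f0 f1 \<noteq> \<infinity>"
proof -
  have "Vn_sq n f0 f1 \<le> path_length_sq n (fp n f0 f1) (ap n) (vp n f0 f1)"
    unfolding Vn_sq_def
    by (rule Inf_lower) (use fp_paths[OF p0 p1] ap_coeffs[OF n] vp_vf[OF n p0 p1] in blast)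
  also have "\<dots> \<le> (\<integral>\<^sup>+ t. ennreal (real n * (512 * (real n + 1))) \<partial>L01)"
    unfolding path_length_sq_def
    by (intro nn_integral_mono ennreal_leI beta_bound[OF p0 p1]) auto
  also have "\<dots> = ennreal (real n * (512 * (real n + 1)))"
    by (simp add: emeasure_restrict_space)
  finally show ?thesis by (auto simp: top_unique)
qed


definition rphi :: "real \<Rightarrow> real \<Rightarrow> real \<Rightarrow> real" where
  "rphi a m s = (if s \<le> m then (a/m) * s else a + (1-a)/(1-m) * (s-m))"
definition rdphi :: "real \<Rightarrow> real \<Rightarrow> real \<Rightarrow> real" where
  "rdphi a m s = (if s \<le> m then a/m else (1-a)/(1-m))"

context
  fixes a m :: real
  assumes a: "0 < a" "a < 1" and m: "0 < m" "m < 1"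
begin

lemma c_pos: "0 < a/m" "0 < (1-a)/(1-m)" using a m by auto

lemma rphi_alt: "rphi a m s = (if s \<le> m then (a/m) * s else (a - (1-a)/(1-m)*m) + (1-a)/(1-m) * s)"
  by (simp add: rphi_def right_diff_distrib)

lemma phi_mono: "s < s' \<Longrightarrow> rphi a m s < rphi a m s'"
proof -
  assume ss: "s < s'"
  note c = c_pos
  show ?thesis
  proof (cases "s' \<le> m")
    case True
    have "(a/m) * s < (a/m) * s'" using ss c by (intro mult_strict_left_mono) auto
    then show ?thesis using True ss by (simp add: rphi_def)
  next
    case False
    show ?thesis
    proof (cases "s \<le> m")
      case True
      have "(a/m) * s \<le> (a/m) * m" using True c by (intro mult_left_mono) auto
      then have "(a/m) * s \<le> a" using m by simp
      moreover have "0 < (1-a)/(1-m) * (s'-m)" using False c by (intro mult_pos_pos) auto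
      moreover have "rphi a m s = (a/m) * s" using True by (simp add: rphi_def)
      moreover have "rphi a m s' = a + (1-a)/(1-m) * (s'-m)" using False by (simp add: rphi_def)
      ultimately show ?thesis by linarith
    next
      case f2: False
      have "(1-a)/(1-m) * (s-m) < (1-a)/(1-m) * (s'-m)" using ss c by (intro mult_strict_left_mono) auto
      then show ?thesis using False f2 by (simp add: rphi_def)
    qed
  qed
qed

lemma phi_inj: "inj (rphi a m)"
proof (rule injI)
  fix x y assume eq: "rphi a m x = rphi a m y"
  show "x = y"
  proof (cases x y rule: linorder_cases)
    case less then show ?thesis using phi_mono[OF less] eq by simp
  next
    case greater then show ?thesis using phi_mono[OF greater] eq by simp
  qed
qed

lemma phi_0: "rphi a m 0 = 0" using m by (simp add: rphi_def)
lemma phi_1: "rphi a m 1 = 1" using a m by (simp add: rphi_def field_simps)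
lemma phi_m: "rphi a m m = a" using m by (simp add: rphi_def)

lemma phi_cont: "continuous_on UNIV (rphi a m)"
proof -
  have "continuous_on ({..m} \<union> {m..}) (rphi a m)"
    unfolding rphi_def
    by (rule continuous_on_cases) (use m in \<open>auto intro!: continuous_intros\<close>)
  moreover have "{..m} \<union> {m..} = (UNIV::real set)" by auto
  ultimately show ?thesis by simp
qed

lemma phi_range: "s \<in> {0..1} \<Longrightarrow> rphi a m s \<in> {0..1}"
proof -
  assume s: "s \<in> {0..1}"
  then have "rphi a m 0 \<le> rphi a m s" "rphi a m s \<le> rphi a m 1"
    using phi_mono by (auto simp: le_less)
  then show ?thesis by (simp add: phi_0 phi_1)
qed

lemma phi_image: "rphi a m ` {0..1} = {0..1}"
proof
  show "rphi a m ` {0..1} \<subseteq> {0..1}" using phi_range by auto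
  show "{0..1} \<subseteq> rphi a m ` {0..1}"
  proof
    fix y :: real assume y: "y \<in> {0..1}"
    have "\<exists>x\<ge>0. x \<le> 1 \<and> rphi a m x = y"
    proof (rule IVT)
      show "\<forall>x. 0 \<le> x \<and> x \<le> 1 \<longrightarrow> isCont (rphi a m) x"
        using phi_cont continuous_on_eq_continuous_at open_UNIV by blast
    qed (use y phi_0 phi_1 in auto)
    then show "y \<in> rphi a m ` {0..1}" by auto
  qed
qed

lemma phi_deriv: "s \<noteq> m \<Longrightarrow> (rphi a m has_real_derivative rdphi a m s) (at s)"
proof -
  assume sm: "s \<noteq> m"
  show ?thesis
  proof (cases "s < m")
    case True
    have "((\<lambda>s. (a/m) * s) has_real_derivative a/m) (at s)"
      using DERIV_cmult[OF DERIV_ident, of "a/m" s] by simp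
    then have "((\<lambda>s. (a/m) * s) has_real_derivative rdphi a m s) (at s)"
      using True by (simp add: rdphi_def)
    then show ?thesis
    proof (rule has_field_derivative_transform_within_open[where S="{..<m}"])
      show "s \<in> {..<m}" using True by simp
    qed (use m in \<open>auto simp: rphi_def rdphi_def True\<close>)
  next
    case False
    then have sm': "m < s" using sm by simp
    have "((\<lambda>s. a + (1-a)/(1-m) * (s-m)) has_real_derivative (1-a)/(1-m)) (at s)"
      using m by (auto intro!: derivative_eq_intros)
    then have "((\<lambda>s. a + (1-a)/(1-m) * (s-m)) has_real_derivative rdphi a m s) (at s)"
      using sm' m by (simp add: rdphi_def)
    then show ?thesis
    proof (rule has_field_derivative_transform_within_open[where S="{m<..}"])
      show "s \<in> {m<..}" using sm' by simp
    qed (use sm' in \<open>auto simp: rphi_def rdphi_def\<close>)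
  qed
qed

lemma phi_pd: "rphi a m piecewise_differentiable_on {0..1}"
  unfolding piecewise_differentiable_on_def
proof (intro conjI exI[of _ "{m}"])
  show "continuous_on {0..1} (rphi a m)" using phi_cont by (rule continuous_on_subset) auto
  show "finite {m}" by simp
  show "\<forall>x\<in>{0..1} - {m}. rphi a m differentiable at x within {0..1}"
  proof
    fix x assume "x \<in> {0..1} - {m}"
    then have "(rphi a m has_real_derivative rdphi a m x) (at x)" using phi_deriv by auto
    then have "rphi a m differentiable at x" using real_differentiable_def by blast
    then show "rphi a m differentiable at x within {0..1}" by (rule differentiable_at_withinI)
  qed
qed

end


lemma lebesgue_affine_meas_real:
  fixes c t :: real
  assumes "c \<noteq> 0"
  shows "(\<lambda>x. t + c * x) \<in> lebesgue \<rightarrow>\<^sub>M lebesgue"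
  using lebesgue_affine_measurable[where c="\<lambda>_. c" and t=t] assms by auto

lemma diff_affine: "(\<lambda>t::real. (t - b) / c) differentiable_on S"
  unfolding differentiable_on_def
proof
  fix x
  have "((\<lambda>t::real. t - b) has_real_derivative 1) (at x)"
    by (auto intro!: derivative_eq_intros)
  then have "((\<lambda>t::real. (t - b) / c) has_real_derivative 1 / c) (at x)"
    by (rule DERIV_cdivide)
  then have "(\<lambda>t::real. (t - b) / c) differentiable at x" using real_differentiable_def by blast
  then show "(\<lambda>t::real. (t - b) / c) differentiable at x within S" by (rule differentiable_at_withinI)
qed

lemma negl_affine_preimage:
  fixes c b :: real
  assumes "negligible N" "c \<noteq> 0"
  shows "negligible {x. b + c * x \<in> N}"
proof -
  have "negligible ((\<lambda>t. (t - b) / c) ` N)"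
    by (rule negligible_differentiable_image_negligible[OF _ assms(1) diff_affine]) simp
  moreover have "{x. b + c * x \<in> N} \<subseteq> (\<lambda>t. (t - b) / c) ` N"
  proof
    fix x assume "x \<in> {x. b + c * x \<in> N}"
    then have "b + c * x \<in> N" by simp
    moreover have "x = ((b + c * x) - b) / c" using assms(2) by simp
    ultimately show "x \<in> (\<lambda>t. (t - b) / c) ` N" by blast
  qed
  ultimately show ?thesis by (rule negligible_subset)
qed

context
  fixes a m :: real
  assumes a: "0 < a" "a < 1" and m: "0 < m" "m < 1"
begin

lemma phi_cases: "rphi a m s = (if s \<le> m then 0 + (a/m) * s else (a - (1-a)/(1-m)*m) + (1-a)/(1-m) * s)"
  using rphi_alt[OF a m] by simp

lemma meas_comp_phi:
  fixes h :: "real \<Rightarrow> real"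
  assumes h: "h \<in> borel_measurable L01"
  shows "(\<lambda>s. h (rphi a m s)) \<in> borel_measurable L01"
proof -
  define h0 where "h0 x = (if x \<in> {0..1} then h x else 0)" for x
  have h0m: "h0 \<in> borel_measurable lebesgue"
    unfolding h0_def by (rule borel_measurable_if_I[OF h]) simp
  note cp = c_pos[OF a m]
  define t2 where "t2 = a - (1-a)/(1-m)*m"
  have g1: "(\<lambda>s. h0 (0 + (a/m) * s)) \<in> borel_measurable lebesgue"
    using measurable_comp[OF lebesgue_affine_meas_real[of "a/m" 0] h0m] cp a m by (simp add: o_def)
  have g2: "(\<lambda>s. h0 (t2 + (1-a)/(1-m) * s)) \<in> borel_measurable lebesgue"
    using measurable_comp[OF lebesgue_affine_meas_real[of "(1-a)/(1-m)" t2] h0m] cp a m by (simp add: o_def)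
  have "{..m} \<in> sets lebesgue" by (intro sets_completionI_sets) simp
  then have pm: "{x \<in> space lebesgue. x \<le> m} \<in> sets lebesgue"
    by (simp add: atMost_def)
  have G: "(\<lambda>s. if s \<le> m then h0 (0 + (a/m) * s) else h0 (t2 + (1-a)/(1-m) * s)) \<in> borel_measurable lebesgue"
    by (rule measurable_If[OF g1 g2 pm])
  have "(\<lambda>s. if s \<le> m then h0 (0 + (a/m) * s) else h0 (t2 + (1-a)/(1-m) * s)) \<in> borel_measurable L01"
    by (rule measurable_restrict_space1[OF G])
  moreover have "(if s \<le> m then h0 (0 + (a/m) * s) else h0 (t2 + (1-a)/(1-m) * s)) = h (rphi a m s)"
    if "s \<in> space L01" for s
  proof -
    have "rphi a m s \<in> {0..1}" using phi_range[OF a m] that by simp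
    then show ?thesis using phi_cases[of s] by (auto simp: h0_def t2_def)
  qed
  ultimately show ?thesis using measurable_cong by (smt (verit))
qed

lemma AE_comp_phi:
  assumes "AE t in L01. P t"
  shows "AE s in L01. P (rphi a m s)"
proof -
  obtain N where N: "negligible N" and NP: "\<And>x. x \<in> {0..1} \<Longrightarrow> x \<notin> N \<Longrightarrow> P x"
    using ae_lebesgue_on_negligible[OF assms] by auto
  note cp = c_pos[OF a m]
  define t2 where "t2 = a - (1-a)/(1-m)*m"
  let ?N1 = "{x. 0 + (a/m) * x \<in> N}" and ?N2 = "{x. t2 + (1-a)/(1-m) * x \<in> N}"
  have n1: "negligible ?N1" by (rule negl_affine_preimage[OF N]) (use cp in auto)
  have n2: "negligible ?N2" by (rule negl_affine_preimage[OF N]) (use cp in auto)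
  have sub: "{x. \<not> (x \<in> {0..1} \<longrightarrow> P (rphi a m x))} \<subseteq> ?N1 \<union> ?N2"
  proof
    fix x assume x: "x \<in> {x. \<not> (x \<in> {0..1} \<longrightarrow> P (rphi a m x))}"
    then have x01: "x \<in> {0..1}" and np: "\<not> P (rphi a m x)" by auto
    have "rphi a m x \<in> {0..1}" using phi_range[OF a m x01] .
    then have "rphi a m x \<in> N" using NP np by blast
    then show "x \<in> ?N1 \<union> ?N2" using phi_cases[of x] by (auto simp: t2_def split: if_splits)
  qed
  have "AE x in lebesgue. x \<in> {0..1} \<longrightarrow> P (rphi a m x)"
    unfolding eventually_ae_filter_negligible using n1 n2 sub by (intro exI[of _ "?N1 \<union> ?N2"]) auto
  then show ?thesis by (subst AE_restrict_space_iff) auto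
qed

end


definition fR where "fR a m f = (\<lambda>s k. f (rphi a m s) k)"
definition vR where "vR a m v = (\<lambda>s k. rdphi a m s * v (rphi a m s) k)"

lemma gcoef_R: "gcoef (fR a m \<alpha>) (fR a m f) s k = gcoef \<alpha> f (rphi a m s) k"
  by (simp add: gcoef_def fR_def)

lemma flux_R: "flux n (fR a m \<alpha>) (fR a m f) (vR a m v) s = (\<lambda>j. rdphi a m s * flux n \<alpha> f v (rphi a m s) j)"
  by (auto simp: flux_def gcoef_R vR_def fun_eq_iff)

lemma beta_R: "beta n (fR a m f) (fR a m \<alpha>) (vR a m v) s = (rdphi a m s)^2 * beta n f \<alpha> v (rphi a m s)"
  by (simp add: beta_def gcoef_R vR_def power_mult_distrib sum_distrib_left algebra_simps)

context
  fixes a m :: real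
  assumes a: "0 < a" "a < 1" and m: "0 < m" "m < 1"
begin

lemma comp_paths:
  assumes p: "f \<in> paths n f0 f1"
  shows "fR a m f \<in> paths n f0 f1"
proof -
  have "pmf_on n (fR a m f s)" if "s \<in> {0..1}" for s
    using p phi_range[OF a m that] by (auto simp: paths_def fR_def)
  moreover have "(\<lambda>s. fR a m f s k) piecewise_differentiable_on {0..1}" if k: "k \<le> n" for k
  proof -
    have "((\<lambda>t. f t k) \<circ> rphi a m) piecewise_differentiable_on {0..1}"
    proof (rule piecewise_differentiable_compose[OF phi_pd[OF a m]])
      show "(\<lambda>t. f t k) piecewise_differentiable_on rphi a m ` {0..1}"
        using paths_pd[OF p k] by (simp add: phi_image[OF a m])
      show "finite ({0..1} \<inter> rphi a m -` {x})" for x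
        using finite_vimageI[OF _ phi_inj[OF a m], of "{x}"] by auto
    qed
    then show ?thesis by (simp add: fR_def o_def)
  qed
  moreover have "fR a m f 0 = f0" "fR a m f 1 = f1"
    using p by (auto simp: fR_def phi_0[OF a m] phi_1[OF a m] paths_def)
  ultimately show ?thesis by (auto simp: paths_def)
qed

lemma comp_coeffs:
  assumes c: "\<alpha> \<in> coeffs n"
  shows "fR a m \<alpha> \<in> coeffs n"
proof -
  have "(\<lambda>s. fR a m \<alpha> s k) \<in> borel_measurable L01" if "k \<le> n" for k
    unfolding fR_def using meas_comp_phi[OF a m, of "\<lambda>t. \<alpha> t k"] c that by (auto simp: coeffs_def)
  moreover have "\<forall>s\<in>{0..1}. fR a m \<alpha> s 0 = 0 \<and> fR a m \<alpha> s n = 1 \<and> (\<forall>k\<le>n. 0 \<le> fR a m \<alpha> s k \<and> fR a m \<alpha> s k \<le> 1)"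
    using c phi_range[OF a m] by (auto simp: coeffs_def fR_def)
  ultimately show ?thesis by (auto simp: coeffs_def)
qed

lemma meas_rdphi: "rdphi a m \<in> borel_measurable L01"
proof -
  have "{..m} \<in> sets lebesgue" by (intro sets_completionI_sets) simp
  then have pm: "{x \<in> space lebesgue. x \<le> m} \<in> sets lebesgue"
    by (simp add: atMost_def)
  have "(\<lambda>s. if s \<le> m then a/m else (1-a)/(1-m)) \<in> borel_measurable lebesgue"
    by (rule measurable_If[OF _ _ pm]) auto
  then show ?thesis unfolding rdphi_def[abs_def] by (rule measurable_restrict_space1)
qed

lemma comp_vf:
  assumes p: "f \<in> paths n f0 f1" and vf: "velocity_field n f \<alpha> v"
  shows "velocity_field n (fR a m f) (fR a m \<alpha>) (vR a m v)"
  unfolding velocity_field_def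
proof (intro conjI allI impI)
  fix k assume "k < n"
  then have "(\<lambda>t. v t k) \<in> borel_measurable L01" using vf by (auto simp: velocity_field_def)
  then have "(\<lambda>s. v (rphi a m s) k) \<in> borel_measurable L01" by (rule meas_comp_phi[OF a m])
  then show "(\<lambda>s. vR a m v s k) \<in> borel_measurable L01"
    unfolding vR_def using meas_rdphi by (intro borel_measurable_times) auto
next
  have A1: "AE s in L01. \<forall>k\<le>n. ((\<lambda>t. f t k) has_real_derivative (- nabla1 (flux n \<alpha> f v (rphi a m s)) k))
       (at (rphi a m s) within {0..1})"
    using vf unfolding velocity_field_def by (intro AE_comp_phi[OF a m]) auto
  have A2: "AE s in L01. s \<notin> {m}" by (rule AE_L01_finite) auto
  show "AE s in L01. \<forall>k\<le>n. ((\<lambda>t. fR a m f t k) has_real_derivative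
      - nabla1 (flux n (fR a m \<alpha>) (fR a m f) (vR a m v) s) k) (at s within {0..1})"
    using A1 A2
  proof eventually_elim
    case (elim s)
    show ?case
    proof (intro allI impI)
      fix k assume k: "k \<le> n"
      have d1: "((\<lambda>t. f t k) has_real_derivative (- nabla1 (flux n \<alpha> f v (rphi a m s)) k))
           (at (rphi a m s) within rphi a m ` {0..1})"
        using elim(1) k by (simp add: phi_image[OF a m])
      have d2: "(rphi a m has_real_derivative rdphi a m s) (at s within {0..1})"
        using phi_deriv[OF a m, of s] elim(2) by (auto intro: has_field_derivative_at_within)
      have "(((\<lambda>t. f t k) \<circ> rphi a m) has_real_derivative (- nabla1 (flux n \<alpha> f v (rphi a m s)) k) * rdphi a m s)
           (at s within {0..1})"
        by (rule DERIV_image_chain[OF d1 d2])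
      moreover have "- nabla1 (flux n (fR a m \<alpha>) (fR a m f) (vR a m v) s) k
          = (- nabla1 (flux n \<alpha> f v (rphi a m s)) k) * rdphi a m s"
        by (simp add: flux_R nabla1_def algebra_simps)
      ultimately show "((\<lambda>t. fR a m f t k) has_real_derivative
          - nabla1 (flux n (fR a m \<alpha>) (fR a m f) (vR a m v) s) k) (at s within {0..1})"
        by (simp add: fR_def o_def)
    qed
  qed
qed

end


definition b0 where "b0 n f \<alpha> v t = (if t \<in> {0..1} then beta n f \<alpha> v t else 0)"
definition G1 where "G1 a n f \<alpha> v t = b0 n f \<alpha> v t * indicator {0..a} t"
definition G2 where "G2 a n f \<alpha> v t = b0 n f \<alpha> v t * indicator {a<..1} t"

lemma b0_nonneg:
  assumes "f \<in> paths n f0 f1" "\<alpha> \<in> coeffs n"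
  shows "0 \<le> b0 n f \<alpha> v t"
  using beta_nonneg[OF assms] by (simp add: b0_def)

lemma b0_meas:
  assumes "f \<in> paths n f0 f1" "\<alpha> \<in> coeffs n" "velocity_field n f \<alpha> v"
  shows "b0 n f \<alpha> v \<in> borel_measurable lebesgue"
  unfolding b0_def[abs_def] by (rule borel_measurable_if_I[OF meas_beta[OF assms]]) simp

lemma G_meas:
  assumes "f \<in> paths n f0 f1" "\<alpha> \<in> coeffs n" "velocity_field n f \<alpha> v"
  shows "G1 a n f \<alpha> v \<in> borel_measurable lebesgue" "G2 a n f \<alpha> v \<in> borel_measurable lebesgue"
proof -
  have "{0..a} \<in> sets lebesgue" "{a<..1} \<in> sets lebesgue" by (auto intro: sets_completionI_sets)
  then show "G1 a n f \<alpha> v \<in> borel_measurable lebesgue" "G2 a n f \<alpha> v \<in> borel_measurable lebesgue"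
    unfolding G1_def[abs_def] G2_def[abs_def] using b0_meas[OF assms]
    by (auto intro!: borel_measurable_times borel_measurable_indicator)
qed

lemma path_length_split:
  assumes p: "f \<in> paths n f0 f1" and c: "\<alpha> \<in> coeffs n" and vf: "velocity_field n f \<alpha> v"
    and a: "0 \<le> a" "a \<le> 1"
  shows "path_length_sq n f \<alpha> v = (\<integral>\<^sup>+t. ennreal (G1 a n f \<alpha> v t) \<partial>lebesgue) + (\<integral>\<^sup>+t. ennreal (G2 a n f \<alpha> v t) \<partial>lebesgue)"
proof -
  have "path_length_sq n f \<alpha> v = (\<integral>\<^sup>+t. ennreal (beta n f \<alpha> v t) * indicator {0..1} t \<partial>lebesgue)"
    unfolding path_length_sq_def by (subst nn_integral_restrict_space) auto
  also have "\<dots> = (\<integral>\<^sup>+t. ennreal (G1 a n f \<alpha> v t) + ennreal (G2 a n f \<alpha> v t) \<partial>lebesgue)"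
  proof (rule nn_integral_cong)
    fix t
    show "ennreal (beta n f \<alpha> v t) * indicator {0..1} t = ennreal (G1 a n f \<alpha> v t) + ennreal (G2 a n f \<alpha> v t)"
      using a by (auto simp: G1_def G2_def b0_def indicator_def)
  qed
  also have "\<dots> = (\<integral>\<^sup>+t. ennreal (G1 a n f \<alpha> v t) \<partial>lebesgue) + (\<integral>\<^sup>+t. ennreal (G2 a n f \<alpha> v t) \<partial>lebesgue)"
    using G_meas[OF p c vf] by (intro nn_integral_add) auto
  finally show ?thesis .
qed

context
  fixes a m :: real
  assumes a: "0 < a" "a < 1" and m: "0 < m" "m < 1"
begin

lemma energy_R:
  assumes p: "f \<in> paths n f0 f1" and c: "\<alpha> \<in> coeffs n" and vf: "velocity_field n f \<alpha> v"
  shows "path_length_sq n (fR a m f) (fR a m \<alpha>) (vR a m v)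
     = ennreal (a/m) * (\<integral>\<^sup>+t. ennreal (G1 a n f \<alpha> v t) \<partial>lebesgue)
     + ennreal ((1-a)/(1-m)) * (\<integral>\<^sup>+t. ennreal (G2 a n f \<alpha> v t) \<partial>lebesgue)"
proof -
  define c1 where "c1 = a/m"
  define c2 where "c2 = (1-a)/(1-m)"
  define t2 where "t2 = a - c2 * m"
  have cp: "0 < c1" "0 < c2" using c_pos[OF a m] by (auto simp: c1_def c2_def)
  have c2m: "t2 + c2 * m = a" by (simp add: t2_def)
  have c21: "t2 + c2 = 1" using m by (simp add: t2_def c2_def field_simps)
  have c1m: "c1 * m = a" using m by (simp add: c1_def)
  have c1g: "a < c1" using a m by (simp add: c1_def field_simps)
  note G1m = G_meas(1)[OF p c vf, of a] and G2m = G_meas(2)[OF p c vf, of a]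
  have ph: "rphi a m s = (if s \<le> m then 0 + c1 * s else t2 + c2 * s)" for s
    using rphi_alt[OF a m, of s] by (simp add: c1_def c2_def t2_def)
  have ph': "rphi a m s = (if s \<le> m then 0 + c1 * s else t2 + c2 * s)" for s
    using ph by simp
  have rd: "rdphi a m s = (if s \<le> m then c1 else c2)" for s by (simp add: rdphi_def c1_def c2_def)
  have pt: "ennreal (beta n (fR a m f) (fR a m \<alpha>) (vR a m v) s) * indicator {0..1} s
      = ennreal (c1^2) * ennreal (G1 a n f \<alpha> v (0 + c1 * s)) + ennreal (c2^2) * ennreal (G2 a n f \<alpha> v (t2 + c2 * s))" for s
  proof (cases "s \<in> {0..1}")
    case True
    have r01: "rphi a m s \<in> {0..1}" using phi_range[OF a m True] .
    show ?thesis
    proof (cases "s \<le> m")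
      case sm: True
      have "c1 * s \<le> a" using sm cp c1m by (metis mult_left_mono less_imp_le)
      moreover have "0 \<le> c1 * s" using True cp by auto
      moreover have "t2 + c2 * s \<le> a" using sm cp c2m by (smt (verit) mult_left_mono)
      ultimately have g1: "G1 a n f \<alpha> v (0 + c1 * s) = beta n f \<alpha> v (c1 * s)"
        and g2: "G2 a n f \<alpha> v (t2 + c2 * s) = 0" using a by (auto simp: G1_def G2_def b0_def indicator_def)
      have l: "beta n (fR a m f) (fR a m \<alpha>) (vR a m v) s = c1^2 * beta n f \<alpha> v (c1 * s)"
        unfolding beta_R using sm by (simp add: ph rd)
      have bn: "0 \<le> beta n f \<alpha> v (c1 * s)" using r01 sm ph[of s] beta_nonneg[OF p c] by simp
      show ?thesis using True unfolding g1 g2 l by (simp add: ennreal_mult bn)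
    next
      case sm: False
      have "a < c1 * s" using sm cp c1m by (metis mult_strict_left_mono not_le)
      moreover have "a < t2 + c2 * s" using sm cp c2m by (smt (verit) mult_strict_left_mono)
      moreover have "c2 * s \<le> c2 * 1" using True cp by (intro mult_left_mono) auto
      then have "t2 + c2 * s \<le> 1" using c21 by simp
      ultimately have i1: "t2 + c2 * s \<in> {0..1}" "t2 + c2 * s \<in> {a<..1}" "0 + c1 * s \<notin> {0..a}"
        using a by auto
      have g1: "G1 a n f \<alpha> v (0 + c1 * s) = 0" using i1 by (simp add: G1_def)
      have g2: "G2 a n f \<alpha> v (t2 + c2 * s) = beta n f \<alpha> v (t2 + c2 * s)"
        using i1 by (simp add: G2_def b0_def)
      have l: "beta n (fR a m f) (fR a m \<alpha>) (vR a m v) s = c2^2 * beta n f \<alpha> v (t2 + c2 * s)"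
        unfolding beta_R using sm by (simp add: ph rd)
      have bn: "0 \<le> beta n f \<alpha> v (t2 + c2 * s)" using r01 sm ph[of s] beta_nonneg[OF p c] by simp
      show ?thesis using True unfolding g1 g2 l by (simp add: ennreal_mult bn)
    qed
  next
    case False
    have i1: "0 + c1 * s \<notin> {0..a}" and i2: "t2 + c2 * s \<notin> {a<..1}"
    proof -
      consider "s < 0" | "1 < s" using False by force
      then have "0 + c1 * s \<notin> {0..a} \<and> t2 + c2 * s \<notin> {a<..1}"
      proof cases
        case 1
        have "c1 * s < 0" using 1 cp by (simp add: mult_pos_neg)
        moreover have "c2 * s < c2 * m" using 1 cp m by (intro mult_strict_left_mono) auto
        ultimately show ?thesis using c2m by auto
      next
        case 2
        have "c1 * 1 < c1 * s" using 2 cp by (intro mult_strict_left_mono) auto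
        moreover have "c2 * 1 < c2 * s" using 2 cp by (intro mult_strict_left_mono) auto
        ultimately show ?thesis using c21 c1g by auto
      qed
      then show "0 + c1 * s \<notin> {0..a}" "t2 + c2 * s \<notin> {a<..1}" by auto
    qed
    have "G1 a n f \<alpha> v (0 + c1 * s) = 0" using i1 by (simp add: G1_def)
    moreover have "G2 a n f \<alpha> v (t2 + c2 * s) = 0" using i2 by (simp add: G2_def)
    ultimately show ?thesis using False by simp
  qed
  have "path_length_sq n (fR a m f) (fR a m \<alpha>) (vR a m v)
      = (\<integral>\<^sup>+s. ennreal (beta n (fR a m f) (fR a m \<alpha>) (vR a m v) s) * indicator {0..1} s \<partial>lebesgue)"
    unfolding path_length_sq_def by (subst nn_integral_restrict_space) auto
  also have "\<dots> = (\<integral>\<^sup>+s. ennreal (c1^2) * ennreal (G1 a n f \<alpha> v (0 + c1 * s))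
                   + ennreal (c2^2) * ennreal (G2 a n f \<alpha> v (t2 + c2 * s)) \<partial>lebesgue)"
    by (simp only: pt)
  also have "\<dots> = ennreal (c1^2) * (\<integral>\<^sup>+s. ennreal (G1 a n f \<alpha> v (0 + c1 * s)) \<partial>lebesgue)
                 + ennreal (c2^2) * (\<integral>\<^sup>+s. ennreal (G2 a n f \<alpha> v (t2 + c2 * s)) \<partial>lebesgue)"
  proof -
    have m1: "(\<lambda>s. G1 a n f \<alpha> v (0 + c1 * s)) \<in> borel_measurable lebesgue"
      using measurable_comp[OF lebesgue_affine_meas_real[of c1 0] G1m] cp by (simp add: o_def)
    have m2: "(\<lambda>s. G2 a n f \<alpha> v (t2 + c2 * s)) \<in> borel_measurable lebesgue"
      using measurable_comp[OF lebesgue_affine_meas_real[of c2 t2] G2m] cp by (simp add: o_def)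
    show ?thesis using m1 m2 by (simp add: nn_integral_add nn_integral_cmult)
  qed
  also have "\<dots> = ennreal c1 * (\<integral>\<^sup>+t. ennreal (G1 a n f \<alpha> v t) \<partial>lebesgue)
                 + ennreal c2 * (\<integral>\<^sup>+t. ennreal (G2 a n f \<alpha> v t) \<partial>lebesgue)"
  proof -
    have e1: "(\<integral>\<^sup>+t. ennreal (G1 a n f \<alpha> v t) \<partial>lebesgue) = ennreal \<bar>c1\<bar> * (\<integral>\<^sup>+s. ennreal (G1 a n f \<alpha> v (0 + c1 * s)) \<partial>lebesgue)"
      by (rule nn_integral_real_affine_lebesgue) (use G1m cp in auto)
    have e2: "(\<integral>\<^sup>+t. ennreal (G2 a n f \<alpha> v t) \<partial>lebesgue) = ennreal \<bar>c2\<bar> * (\<integral>\<^sup>+s. ennreal (G2 a n f \<alpha> v (t2 + c2 * s)) \<partial>lebesgue)"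
      by (rule nn_integral_real_affine_lebesgue) (use G2m cp in auto)
    have q1: "ennreal (c1^2) = ennreal c1 * ennreal c1" using cp by (simp add: power2_eq_square ennreal_mult)
    have q2: "ennreal (c2^2) = ennreal c2 * ennreal c2" using cp by (simp add: power2_eq_square ennreal_mult)
    show ?thesis using cp by (simp add: e1 e2 q1 q2 mult.assoc)
  qed
  finally show ?thesis by (simp add: c1_def c2_def)
qed

end


lemma sets_borel_atMost: "sets (borel::real measure) = sigma_sets UNIV (range atMost)"
  by (subst borel_eq_atMost) (simp add: sets_measure_of)

lemma partA:
  fixes h :: "real \<Rightarrow> real" and T :: real
  assumes hm: "h \<in> borel_measurable lebesgue"
    and hnn: "\<And>t. 0 \<le> h t" and hz: "\<And>t. t \<notin> {0..1} \<Longrightarrow> h t = 0"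
    and tot: "(\<integral>\<^sup>+t. ennreal (h t) \<partial>lebesgue) = ennreal T" and T: "0 \<le> T"
    and part: "\<And>x. 0 < x \<Longrightarrow> x < 1 \<Longrightarrow> (\<integral>\<^sup>+t. ennreal (h t * indicator {0..x} t) \<partial>lebesgue) = ennreal (x * T)"
  shows "AE t in lebesgue. t \<in> {0..1} \<longrightarrow> h t = T"
proof -
  obtain g where gm: "g \<in> borel_measurable lborel" and hg: "AE t in lborel. h t = g t"
    using completion_ex_borel_measurable_real[of h lborel] hm by auto
  have hgL: "AE t in lebesgue. h t = g t" using hg by (rule AE_completion)
  define clamp where "clamp x = (if x < 0 then 0 else if x \<le> 1 then x else (1::real))" for x
  have F: "(\<integral>\<^sup>+t. ennreal (h t) * indicator {..x} t \<partial>lebesgue) = ennreal (T * clamp x)" for x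
  proof -
    consider "x < 0" | "x = 0" | "0 < x \<and> x < 1" | "1 \<le> x" by force
    then show ?thesis
    proof cases
      case 1
      have "(\<integral>\<^sup>+t. ennreal (h t) * indicator {..x} t \<partial>lebesgue) = (\<integral>\<^sup>+(t::real). 0 \<partial>lebesgue)"
        by (rule nn_integral_cong) (use 1 hz in \<open>force split: split_indicator\<close>)
      then show ?thesis using 1 by (simp add: clamp_def)
    next
      case 2
      have "{0::real} \<in> null_sets lebesgue"
        using negligible_iff_null_sets negligible_finite by blast
      then have ae0: "AE (t::real) in lebesgue. t \<notin> {0}" by (rule AE_not_in)
      have "(\<integral>\<^sup>+t. ennreal (h t) * indicator {..x} t \<partial>lebesgue) = (\<integral>\<^sup>+(t::real). 0 \<partial>lebesgue)"
      proof (rule nn_integral_cong_AE)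
        show "AE t in lebesgue. ennreal (h t) * indicator {..x} t = 0"
          using ae0
        proof eventually_elim
          case (elim t)
          show ?case
          proof (cases "t \<le> x")
            case True
            then have "t \<notin> {0..1}" using elim 2 by auto
            then show ?thesis using hz by simp
          qed simp
        qed
      qed
      then show ?thesis using 2 by (simp add: clamp_def)
    next
      case 3
      have "(\<integral>\<^sup>+t. ennreal (h t) * indicator {..x} t \<partial>lebesgue) = (\<integral>\<^sup>+t. ennreal (h t * indicator {0..x} t) \<partial>lebesgue)"
        by (rule nn_integral_cong) (use hz in \<open>force split: split_indicator\<close>)
      then show ?thesis using 3 part[of x] by (simp add: clamp_def mult.commute)
    next
      case 4
      have "(\<integral>\<^sup>+t. ennreal (h t) * indicator {..x} t \<partial>lebesgue) = (\<integral>\<^sup>+t. ennreal (h t) \<partial>lebesgue)"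
        by (rule nn_integral_cong) (use hz 4 in \<open>force split: split_indicator\<close>)
      then show ?thesis using 4 tot by (simp add: clamp_def)
    qed
  qed
  have F2: "(\<integral>\<^sup>+t. ennreal (T * indicator {0..1} t) * indicator {..x} t \<partial>lborel) = ennreal (T * clamp x)" for x
  proof -
    have "(\<integral>\<^sup>+t. ennreal (T * indicator {0..1} t) * indicator {..x} t \<partial>lborel)
        = (\<integral>\<^sup>+t. ennreal T * indicator ({0..1} \<inter> {..x}) t \<partial>lborel)"
      by (intro nn_integral_cong) (auto simp: indicator_def)
    also have "\<dots> = ennreal T * emeasure lborel ({0..1} \<inter> {..x})"
      by (simp add: nn_integral_cmult_indicator)
    also have "{0..1} \<inter> {..x} = (if x < 0 then {} else {0..min 1 x})" by auto
    finally show ?thesis using T by (auto simp: clamp_def ennreal_mult min_def)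
  qed
  have Fg: "emeasure (density lborel (\<lambda>t. ennreal (g t))) {..x} = ennreal (T * clamp x)" for x
  proof -
    have "emeasure (density lborel (\<lambda>t. ennreal (g t))) {..x} = (\<integral>\<^sup>+t. ennreal (g t) * indicator {..x} t \<partial>lborel)"
      using gm by (subst emeasure_density) auto
    also have "\<dots> = (\<integral>\<^sup>+t. ennreal (g t) * indicator {..x} t \<partial>lebesgue)"
      by (simp add: nn_integral_completion)
    also have "\<dots> = (\<integral>\<^sup>+t. ennreal (h t) * indicator {..x} t \<partial>lebesgue)"
      using hgL by (intro nn_integral_cong_AE) auto
    finally show ?thesis using F by simp
  qed
  have FT: "emeasure (density lborel (\<lambda>t. ennreal (T * indicator {0..1} t))) {..x} = ennreal (T * clamp x)" for x
    using F2[of x] by (subst emeasure_density) auto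
  have eq: "density lborel (\<lambda>t. ennreal (g t)) = density lborel (\<lambda>t. ennreal (T * indicator {0..1} t))"
  proof (rule measure_eqI_generator_eq[where \<Omega>=UNIV and E="range atMost" and A="\<lambda>i. {..real i}"])
    show "Int_stable (range atMost :: real set set)"
      by (auto simp: Int_stable_def)
    show "range atMost \<subseteq> Pow (UNIV::real set)" by auto
    fix X assume "X \<in> range (atMost :: real \<Rightarrow> _)"
    then obtain x where "X = {..x}" by auto
    then show "emeasure (density lborel (\<lambda>t. ennreal (g t))) X = emeasure (density lborel (\<lambda>t. ennreal (T * indicator {0..1} t))) X"
      using Fg FT by simp
  next
    show "sets (density lborel (\<lambda>t. ennreal (g t))) = sigma_sets UNIV (range atMost)"
      by (simp only: sets_density sets_lborel sets_borel_atMost)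
    show "sets (density lborel (\<lambda>t::real. ennreal (T * indicator {0..1} t))) = sigma_sets UNIV (range atMost)"
      by (simp only: sets_density sets_lborel sets_borel_atMost)
    show "range (\<lambda>i. {..real i}) \<subseteq> range atMost" by auto
    show "(\<Union>i. {..real i}) = (UNIV :: real set)"
      by (auto intro: real_arch_simple)
    show "emeasure (density lborel (\<lambda>t. ennreal (g t))) {..real i} \<noteq> \<infinity>" for i
      using Fg by simp
  qed
  have "AE t in lborel. ennreal (g t) = ennreal (T * indicator {0..1} t)"
    using sigma_finite_measure.density_unique[OF sigma_finite_lborel _ _ eq] gm by auto
  then have "AE t in lebesgue. ennreal (g t) = ennreal (T * indicator {0..1} t)" by (rule AE_completion)
  then show ?thesis using hgL
  proof eventually_elim
    case (elim t)
    show ?case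
    proof
      assume "t \<in> {0..1}"
      then have "ennreal (h t) = ennreal T" using elim by simp
      then show "h t = T" using hnn T by simp
    qed
  qed
qed


lemma calc_ab:
  fixes a Ar Br :: real
  assumes a: "0 < a" "a < 1"
    and le: "\<And>m. 0 < m \<Longrightarrow> m < 1 \<Longrightarrow> Ar + Br \<le> (a/m) * Ar + ((1-a)/(1-m)) * Br"
  shows "Ar = a * (Ar + Br)"
proof -
  define G where "G y = (a/y) * Ar + ((1-a)/(1-y)) * Br" for y
  have D: "(G has_real_derivative (- (a / (a*a)) * Ar + ((1-a) / ((1-a)*(1-a))) * Br)) (at a)"
    unfolding G_def[abs_def] using a by (auto intro!: derivative_eq_intros simp: power2_eq_square)
  have Ga: "G a = Ar + Br" using a by (simp add: G_def)
  have "- (a / (a*a)) * Ar + ((1-a) / ((1-a)*(1-a))) * Br = 0"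
  proof (rule DERIV_local_min[OF D, of "min a (1-a)"])
    show "0 < min a (1-a)" using a by simp
    show "\<forall>y. \<bar>a - y\<bar> < min a (1 - a) \<longrightarrow> G a \<le> G y"
    proof (intro allI impI)
      fix y assume "\<bar>a - y\<bar> < min a (1 - a)"
      then have "0 < y" "y < 1" by (auto simp: abs_less_iff)
      then show "G a \<le> G y" using le[of y] Ga by (simp add: G_def)
    qed
  qed
  then have e: "Ar / a = Br / (1-a)" using a by simp
  have "Ar = a * (Ar / a)" using a by simp
  also have "\<dots> = a * (Br / (1-a))" using e by simp
  finally have e2: "Ar * (1-a) = a * Br" using a by (simp add: field_simps)
  have h3: "Ar - a * Ar = a * Br" using e2 by (simp add: algebra_simps)
  have "a * (Ar + Br) = a * Ar + a * Br" by (simp add: distrib_left)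
  then show ?thesis using h3 by linarith
qed

lemma claim1:
  assumes n: "1 \<le> n" and p0: "pmf_on n f0" and p1: "pmf_on n f1"
    and g: "is_geodesic n f0 f1 f \<alpha> v"
  shows "\<exists>c. AE t in lebesgue_on {0..1}. beta n f \<alpha> v t = c"
proof -
  have p: "f \<in> paths n f0 f1" and c: "\<alpha> \<in> coeffs n" and vf: "velocity_field n f \<alpha> v"
    and pl: "path_length_sq n f \<alpha> v = Vn_sq n f0 f1"
    using g by (auto simp: is_geodesic_def)
  have fin: "path_length_sq n f \<alpha> v \<noteq> \<infinity>" using pl Vn_sq_finite[OF n p0 p1] by simp
  define T where "T = enn2real (path_length_sq n f \<alpha> v)"
  have plT: "path_length_sq n f \<alpha> v = ennreal T" and T0: "0 \<le> T"
    using fin by (auto simp: T_def less_top)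
  have tot: "(\<integral>\<^sup>+t. ennreal (b0 n f \<alpha> v t) \<partial>lebesgue) = ennreal T"
  proof -
    have "path_length_sq n f \<alpha> v = (\<integral>\<^sup>+t. ennreal (beta n f \<alpha> v t) * indicator {0..1} t \<partial>lebesgue)"
      unfolding path_length_sq_def by (subst nn_integral_restrict_space) auto
    also have "\<dots> = (\<integral>\<^sup>+t. ennreal (b0 n f \<alpha> v t) \<partial>lebesgue)"
      by (rule nn_integral_cong) (auto simp: b0_def split: split_indicator)
    finally show ?thesis using plT by simp
  qed
  have part: "(\<integral>\<^sup>+t. ennreal (b0 n f \<alpha> v t * indicator {0..x} t) \<partial>lebesgue) = ennreal (x * T)"
    if x: "0 < x" "x < 1" for x
  proof -
    define A where "A = (\<integral>\<^sup>+t. ennreal (G1 x n f \<alpha> v t) \<partial>lebesgue)"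
    define B where "B = (\<integral>\<^sup>+t. ennreal (G2 x n f \<alpha> v t) \<partial>lebesgue)"
    have AB: "path_length_sq n f \<alpha> v = A + B"
      unfolding A_def B_def by (rule path_length_split[OF p c vf]) (use x in auto)
    have Af: "A \<noteq> \<infinity>" "B \<noteq> \<infinity>" using AB fin by auto
    define Ar where "Ar = enn2real A"
    define Br where "Br = enn2real B"
    have Ae: "A = ennreal Ar" "B = ennreal Br" "0 \<le> Ar" "0 \<le> Br"
      using Af by (auto simp: Ar_def Br_def less_top)
    have "Ar + Br \<le> (x/m) * Ar + ((1-x)/(1-m)) * Br" if m: "0 < m" "m < 1" for m
    proof -
      have "Vn_sq n f0 f1 \<le> path_length_sq n (fR x m f) (fR x m \<alpha>) (vR x m v)"
        unfolding Vn_sq_def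
        by (rule Inf_lower)
          (use comp_paths[OF x m p] comp_coeffs[OF x m c] comp_vf[OF x m p vf] in blast)
      also have "\<dots> = ennreal (x/m) * A + ennreal ((1-x)/(1-m)) * B"
        unfolding A_def B_def by (rule energy_R[OF x m p c vf])
      also have "\<dots> = ennreal ((x/m) * Ar + ((1-x)/(1-m)) * Br)"
      proof -
        have q1: "ennreal (x/m) * A = ennreal ((x/m) * Ar)"
          unfolding Ae(1) by (rule ennreal_mult[symmetric]) (use x m Ae in auto)
        have q2: "ennreal ((1-x)/(1-m)) * B = ennreal (((1-x)/(1-m)) * Br)"
          unfolding Ae(2) by (rule ennreal_mult[symmetric]) (use x m Ae in auto)
        have q3: "ennreal ((x/m) * Ar + ((1-x)/(1-m)) * Br) = ennreal ((x/m) * Ar) + ennreal (((1-x)/(1-m)) * Br)"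
          by (rule ennreal_plus) (use Ae x m in auto)
        show ?thesis unfolding q1 q2 q3 ..
      qed
      finally have le1: "Vn_sq n f0 f1 \<le> ennreal ((x/m) * Ar + ((1-x)/(1-m)) * Br)" .
      have "Vn_sq n f0 f1 = ennreal (Ar + Br)"
        using pl AB Ae by (simp add: ennreal_plus)
      then have "ennreal (Ar + Br) \<le> ennreal ((x/m) * Ar + ((1-x)/(1-m)) * Br)" using le1 by simp
      moreover have "0 \<le> (x/m) * Ar + ((1-x)/(1-m)) * Br" using Ae x m by simp
      ultimately show ?thesis by (simp add: ennreal_le_iff)
    qed
    then have "Ar = x * (Ar + Br)" by (intro calc_ab x)
    moreover have "ennreal T = ennreal (Ar + Br)" using AB plT Ae by (simp add: ennreal_plus)
    then have "T = Ar + Br" using T0 Ae by (simp add: ennreal_plus[symmetric] del: ennreal_plus)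
    ultimately have "A = ennreal (x * T)" using Ae by simp
    then show ?thesis by (simp add: A_def G1_def)
  qed
  have "AE t in lebesgue. t \<in> {0..1} \<longrightarrow> b0 n f \<alpha> v t = T"
  proof (rule partA[OF b0_meas[OF p c vf] _ _ tot T0 part])
    show "0 \<le> b0 n f \<alpha> v t" for t by (rule b0_nonneg[OF p c])
    show "t \<notin> {0..1} \<Longrightarrow> b0 n f \<alpha> v t = 0" for t unfolding b0_def by auto
  qed auto
  then have "AE t in lebesgue_on {0..1}. beta n f \<alpha> v t = T"
    by (subst AE_restrict_space_iff) (auto simp: b0_def elim!: AE_mp)
  then show ?thesis by blast
qed


theorem lemma3p4:
  fixes n :: nat and f0 f1 :: "nat \<Rightarrow> real" and f \<alpha> v :: "real \<Rightarrow> nat \<Rightarrow> real"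
  assumes "n \<ge> 1" and "pmf_on n f0" and "pmf_on n f1"
    and "is_geodesic n f0 f1 f \<alpha> v"
  shows "(\<exists>c. AE t in lebesgue_on {0..1}. beta n f \<alpha> v t = c)
    \<and> Vn n f0 f1 \<ge> ennreal \<bar>mean n f0 - mean n f1\<bar>
    \<and> (Vn n f0 f1 = ennreal \<bar>mean n f0 - mean n f1\<bar> \<longleftrightarrow>
         (\<exists>c. AE t in lebesgue_on {0..1}. \<forall>k<n. gcoef \<alpha> f t k \<noteq> 0 \<longrightarrow> v t k = c))"
  using claim1[OF assms(1-4)] Vn_lower[of n f0 f1] Vn_eq_iff[OF assms(4)] by blast

end
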